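(* Let $X$ be a Fréchet space and $(T(t))_{t\geqslant0}$ an exponentially equicontinuous $C_0$-semigroup on $X$ with generator $(A,D(A))$, and assume that $\{A^n\}_{n\in\mathbb{N}_0}\subseteq L(X)$ is equicontinuous (in particular $D(A)=X$ and $A\in L(X)$). Then $\operatorname{s}(A)=\log\operatorname{r}(T(1))$.
   Context: A Fréchet space is a complete metrizable locally convex space; $L(X)$ is the space of continuous linear maps $X\to X$. A set of operators is equicontinuous if for every continuous seminorm $q$ there exist a continuous seminorm $p$ and $C\geqslant0$ with $q(Sx)\leqslant Cp(x)$ for all $S$ in the set and all $x$. A $C_0$-semigroup is a family $(T(t))_{t\geqslant0}\subseteq L(X)$ with $T(0)=\mathrm{id}_X$, $T(t+s)=T(t)T(s)$ and $t\mapsto T(t)x$ continuous for each $x$; it is exponentially equicontinuous if $\{e^{-\omega t}T(t)\}_{t\geqslant0}$ is equicontinuous for some $\omega\in\mathbb{R}$. Its generator is $Ax=\lim_{t\searrow0}\frac{T(t)x-x}{t}$ on $D(A)=\{x: \text{this limit exists}\}$. Let $L(X)_0$ be the set of $B\in L(X)$ such that $\{(\mu B)^n\}_{n\in\mathbb{N}_0}$ is equicontinuous for some $\mu\in\mathbb{C}\setminus\{0\}$. For a linear operator $B\colon D(B)\to X$ put $\delta_B=\{\infty\}$ if $D(B)=X$ and $B\in L(X)_0$, and $\delta_B=\varnothing$ otherwise; $\rho(B)=\{\lambda\in\mathbb{C}: \lambda-B\colon D(B)\to X\text{ bijective and }(\lambda-B)^{-1}\in L(X)_0\}\cup\delta_B$;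 $\sigma(B)=(\mathbb{C}\cup\{\infty\})\setminus\rho(B)$. The spectral bound is $\operatorname{s}(B)=\sup\{\operatorname{Re}\lambda:\lambda\in\sigma(B)\cap\mathbb{C}\}$ and, for $B\in L(X)$, the spectral radius is $\operatorname{r}(B)=\sup\{|\lambda|:\lambda\in\sigma(B)\}$ with the convention $|\infty|=+\infty$. *)

theory Defs
  imports "HOL-Analysis.Analysis"
begin

text \<open>A complex Frechet space is modelled by a type 'a with a complex scalar
multiplication sc and a countable, increasing, separating family P of seminorms
such that the induced uniform structure is complete.\<close>

definition is_seminorm :: "(complex \<Rightarrow> 'a::ab_group_add \<Rightarrow> 'a) \<Rightarrow> ('a \<Rightarrow> real) \<Rightarrow> bool" where
  "is_seminorm sc q \<longleftrightarrow> (\<forall>c x. q (sc c x) = cmod c * q x) \<and> (\<forall>x y. q (x + y) \<le> q x + q y)"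

definition frechet :: "(complex \<Rightarrow> 'a::ab_group_add \<Rightarrow> 'a) \<Rightarrow> (nat \<Rightarrow> 'a \<Rightarrow> real) \<Rightarrow> bool" where
  "frechet sc P \<longleftrightarrow> vector_space sc
     \<and> (\<forall>n. is_seminorm sc (P n))
     \<and> (\<forall>n x. P n x \<le> P (Suc n) x)
     \<and> (\<forall>x. (\<forall>n. P n x = 0) \<longrightarrow> x = 0)
     \<and> (\<forall>u :: nat \<Rightarrow> 'a.
          (\<forall>n \<epsilon>. \<epsilon> > 0 \<longrightarrow> (\<exists>N. \<forall>i\<ge>N. \<forall>j\<ge>N. P n (u i - u j) < \<epsilon>))
          \<longrightarrow> (\<exists>x. \<forall>n. (\<lambda>i. P n (u i - x)) \<longlonglongrightarrow> 0))"

definition cont_seminorm :: "(complex \<Rightarrow> 'a::ab_group_add \<Rightarrow> 'a) \<Rightarrow> (nat \<Rightarrow> 'a \<Rightarrow> real) \<Rightarrow> ('a \<Rightarrow> real) \<Rightarrow> bool" where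
  "cont_seminorm sc P q \<longleftrightarrow> is_seminorm sc q \<and> (\<exists>n C. \<forall>x. q x \<le> C * P n x)"

definition equicont :: "(complex \<Rightarrow> 'a::ab_group_add \<Rightarrow> 'a) \<Rightarrow> (nat \<Rightarrow> 'a \<Rightarrow> real) \<Rightarrow> ('a \<Rightarrow> 'a) set \<Rightarrow> bool" where
  "equicont sc P S \<longleftrightarrow> (\<forall>q. cont_seminorm sc P q \<longrightarrow>
      (\<exists>p C. cont_seminorm sc P p \<and> C \<ge> 0 \<and> (\<forall>B\<in>S. \<forall>x. q (B x) \<le> C * p x)))"

definition Lop :: "(complex \<Rightarrow> 'a::ab_group_add \<Rightarrow> 'a) \<Rightarrow> (nat \<Rightarrow> 'a \<Rightarrow> real) \<Rightarrow> ('a \<Rightarrow> 'a) set" where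
  "Lop sc P = {B. Vector_Spaces.linear sc sc B \<and> equicont sc P {B}}"

definition ftends :: "(complex \<Rightarrow> 'a::ab_group_add \<Rightarrow> 'a) \<Rightarrow> (nat \<Rightarrow> 'a \<Rightarrow> real) \<Rightarrow> ('b \<Rightarrow> 'a) \<Rightarrow> 'a \<Rightarrow> 'b filter \<Rightarrow> bool" where
  "ftends sc P f x F \<longleftrightarrow> (\<forall>n. ((\<lambda>t. P n (f t - x)) \<longlongrightarrow> 0) F)"

definition c0_semigroup :: "(complex \<Rightarrow> 'a::ab_group_add \<Rightarrow> 'a) \<Rightarrow> (nat \<Rightarrow> 'a \<Rightarrow> real) \<Rightarrow> (real \<Rightarrow> 'a \<Rightarrow> 'a) \<Rightarrow> bool" where
  "c0_semigroup sc P T \<longleftrightarrow> (\<forall>t\<ge>0. T t \<in> Lop sc P) \<and> T 0 = id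
     \<and> (\<forall>t s. t \<ge> 0 \<longrightarrow> s \<ge> 0 \<longrightarrow> T (t + s) = T t \<circ> T s)
     \<and> (\<forall>x. \<forall>t\<ge>0. ftends sc P (\<lambda>s. T s x) (T t x) (at t within {0..}))"

definition exp_equicont :: "(complex \<Rightarrow> 'a::ab_group_add \<Rightarrow> 'a) \<Rightarrow> (nat \<Rightarrow> 'a \<Rightarrow> real) \<Rightarrow> (real \<Rightarrow> 'a \<Rightarrow> 'a) \<Rightarrow> bool" where
  "exp_equicont sc P T \<longleftrightarrow> (\<exists>\<omega>::real. equicont sc P {(\<lambda>x. sc (complex_of_real (exp (- \<omega> * t))) (T t x)) | t. t \<ge> 0})"

definition gen_dom :: "(complex \<Rightarrow> 'a::ab_group_add \<Rightarrow> 'a) \<Rightarrow> (nat \<Rightarrow> 'a \<Rightarrow> real) \<Rightarrow> (real \<Rightarrow> 'a \<Rightarrow> 'a) \<Rightarrow> 'a set" where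
  "gen_dom sc P T = {x. \<exists>y. ftends sc P (\<lambda>t. sc (complex_of_real (1 / t)) (T t x - x)) y (at_right 0)}"

definition gen :: "(complex \<Rightarrow> 'a::ab_group_add \<Rightarrow> 'a) \<Rightarrow> (nat \<Rightarrow> 'a \<Rightarrow> real) \<Rightarrow> (real \<Rightarrow> 'a \<Rightarrow> 'a) \<Rightarrow> 'a \<Rightarrow> 'a" where
  "gen sc P T x = (THE y. ftends sc P (\<lambda>t. sc (complex_of_real (1 / t)) (T t x - x)) y (at_right 0))"

definition L0 :: "(complex \<Rightarrow> 'a::ab_group_add \<Rightarrow> 'a) \<Rightarrow> (nat \<Rightarrow> 'a \<Rightarrow> real) \<Rightarrow> ('a \<Rightarrow> 'a) set" where
  "L0 sc P = {B \<in> Lop sc P. \<exists>\<mu>. \<mu> \<noteq> 0 \<and> equicont sc P (range (\<lambda>n. (\<lambda>x. sc \<mu> (B x)) ^^ n))}"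

text \<open>Resolvent set and spectrum in the extended plane C \<union> {\<infinity>}, where None represents \<infinity>.
  The operator B has domain D.\<close>
definition resolvent_set :: "(complex \<Rightarrow> 'a::ab_group_add \<Rightarrow> 'a) \<Rightarrow> (nat \<Rightarrow> 'a \<Rightarrow> real) \<Rightarrow> 'a set \<Rightarrow> ('a \<Rightarrow> 'a) \<Rightarrow> complex option set" where
  "resolvent_set sc P D B =
     Some ` {l. bij_betw (\<lambda>x. sc l x - B x) D UNIV
               \<and> inv_into D (\<lambda>x. sc l x - B x) \<in> L0 sc P}
     \<union> (if D = UNIV \<and> B \<in> L0 sc P then {None} else {})"

definition spectrum_ext :: "(complex \<Rightarrow> 'a::ab_group_add \<Rightarrow> 'a) \<Rightarrow> (nat \<Rightarrow> 'a \<Rightarrow> real) \<Rightarrow> 'a set \<Rightarrow> ('a \<Rightarrow> 'a) \<Rightarrow> complex option set" where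
  "spectrum_ext sc P D B = UNIV - resolvent_set sc P D B"

text \<open>Spectral bound (sup over the empty set is -\<infinity>).\<close>
definition spectral_bound :: "(complex \<Rightarrow> 'a::ab_group_add \<Rightarrow> 'a) \<Rightarrow> (nat \<Rightarrow> 'a \<Rightarrow> real) \<Rightarrow> 'a set \<Rightarrow> ('a \<Rightarrow> 'a) \<Rightarrow> ereal" where
  "spectral_bound sc P D B = Sup {ereal (Re l) | l. Some l \<in> spectrum_ext sc P D B}"

text \<open>Spectral radius of B \<in> L(X), with |\<infinity>| = +\<infinity>.\<close>
definition spectral_radius :: "(complex \<Rightarrow> 'a::ab_group_add \<Rightarrow> 'a) \<Rightarrow> (nat \<Rightarrow> 'a \<Rightarrow> real) \<Rightarrow> ('a \<Rightarrow> 'a) \<Rightarrow> ereal" where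
  "spectral_radius sc P B = Sup ((\<lambda>z. case z of None \<Rightarrow> \<infinity> | Some l \<Rightarrow> ereal (cmod l)) ` spectrum_ext sc P UNIV B)"

text \<open>Extended logarithm: log \<infinity> = \<infinity>, log r = -\<infinity> for r \<le> 0.\<close>
definition elog :: "ereal \<Rightarrow> ereal" where
  "elog r = (if r = \<infinity> then \<infinity> else if r \<le> 0 then - \<infinity> else ereal (ln (real_of_ereal r)))"

end

theory Submission
  imports Defs "HOL-Complex_Analysis.Complex_Analysis"
begin

locale fr =
  fixes sc :: "complex \<Rightarrow> 'a::ab_group_add \<Rightarrow> 'a" and P :: "nat \<Rightarrow> 'a \<Rightarrow> real"
  assumes fre: "frechet sc P"
begin

lemma vs: "vector_space sc" using fre unfolding frechet_def by auto

sublocale V: vector_space sc by (rule vs)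

lemma semi: "is_seminorm sc (P n)" using fre unfolding frechet_def by auto

lemma P_sc: "P n (sc c x) = cmod c * P n x" using semi unfolding is_seminorm_def by auto
lemma P_tri: "P n (x + y) \<le> P n x + P n y" using semi unfolding is_seminorm_def by auto
lemma P_0[simp]: "P n 0 = 0" using P_sc[of n 0 0] by simp
lemma P_neg[simp]: "P n (- x) = P n x" using P_sc[of n "-1" x] by simp
lemma P_nonneg[simp]: "0 \<le> P n x"
  using P_tri[of n x "-x"] by simp
lemma P_commute: "P n (x - y) = P n (y - x)"
  by (metis P_neg minus_diff_eq)
lemma P_tri_diff: "P n (x - z) \<le> P n (x - y) + P n (y - z)"
  using P_tri[of n "x - y" "y - z"] by simp
lemma P_diff: "P n (x - y) \<le> P n x + P n y"
  using P_tri[of n x "-y"] by simp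
lemma P_rev: "\<bar>P n x - P n y\<bar> \<le> P n (x - y)"
  using P_tri[of n "x - y" y] P_tri[of n "y - x" x] P_commute[of n x y] by auto
lemma P_mono: "n \<le> m \<Longrightarrow> P n x \<le> P m x"
proof (induction m)
  case 0 then show ?case by simp
next
  case (Suc m)
  have "P m x \<le> P (Suc m) x" using fre unfolding frechet_def by auto
  with Suc show ?case by (cases "n = Suc m") auto
qed
lemma P_sum: "P n (sum f S) \<le> (\<Sum>i\<in>S. P n (f i))"
proof (induction S rule: infinite_finite_induct)
  case (insert x F)
  then show ?case using P_tri[of n "f x" "sum f F"] by simp
qed auto
lemma sep: "(\<And>n. P n x = 0) \<Longrightarrow> x = 0" using fre unfolding frechet_def by auto
lemma sep_le: "(\<And>n. P n x \<le> 0) \<Longrightarrow> x = 0"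
  using sep P_nonneg by (meson antisym)
lemma complete:
  assumes "\<And>n \<epsilon>. \<epsilon> > 0 \<Longrightarrow> \<exists>N. \<forall>i\<ge>N. \<forall>j\<ge>N. P n (u i - u j) < \<epsilon>"
  shows "\<exists>x. ftends sc P u x sequentially"
  using fre assms unfolding frechet_def ftends_def by blast

lemma sc_minus1: "sc (-1) x = - x" by simp
lemma sc_diff: "sc c (x - y) = sc c x - sc c y" by (simp add: V.scale_right_diff_distrib)

abbreviation "tends \<equiv> ftends sc P"

lemma tends_unique:
  assumes "F \<noteq> bot" "tends f x F" "tends f y F" shows "x = y"
proof -
  have "x - y = 0"
  proof (rule sep_le)
  fix n
  have "((\<lambda>t. P n (f t - x) + P n (f t - y)) \<longlongrightarrow> 0) F"
    using tendsto_add[OF assms(2)[unfolded ftends_def, rule_format, of n] assms(3)[unfolded ftends_def, rule_format, of n]] by simp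
  moreover have "P n (x - y) \<le> P n (f t - x) + P n (f t - y)" for t
    using P_tri_diff[where n=n and x=x and y="f t" and z=y] P_commute[of n x "f t"] by simp
  then have "\<forall>\<^sub>F t in F. P n (x - y) \<le> P n (f t - x) + P n (f t - y)"
    by (intro always_eventually) auto
  ultimately show "P n (x - y) \<le> 0"
    by (rule tendsto_le[OF assms(1) _ tendsto_const])
  qed
  then show ?thesis by simp
qed

lemma tendsI:
  assumes "\<And>n. \<exists>b. (b \<longlongrightarrow> 0) F \<and> (\<forall>\<^sub>F t in F. P n (g t - y) \<le> b t)"
  shows "tends g y F"
  unfolding ftends_def
proof
  fix n
  obtain b where b: "(b \<longlongrightarrow> 0) F" "\<forall>\<^sub>F t in F. P n (g t - y) \<le> b t" using assms by blast
  show "((\<lambda>t. P n (g t - y)) \<longlongrightarrow> 0) F"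
    by (rule tendsto_sandwich[OF _ b(2) tendsto_const b(1)]) auto
qed

lemma tendsD: "tends g y F \<Longrightarrow> ((\<lambda>t. P n (g t - y)) \<longlongrightarrow> 0) F"
  unfolding ftends_def by auto

lemma tends_const: "tends (\<lambda>t. x) x F"
  unfolding ftends_def by simp

lemma tends_add: "tends f x F \<Longrightarrow> tends g y F \<Longrightarrow> tends (\<lambda>t. f t + g t) (x + y) F"
proof (rule tendsI)
  fix n assume a: "tends f x F" "tends g y F"
  show "\<exists>b. (b \<longlongrightarrow> 0) F \<and> (\<forall>\<^sub>F t in F. P n (f t + g t - (x + y)) \<le> b t)"
    apply (rule exI[of _ "\<lambda>t. P n (f t - x) + P n (g t - y)"])
    using tendsto_add[OF tendsD[OF a(1)] tendsD[OF a(2)]] P_tri[of n "f t - x" "g t - y" for t]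
    by (auto simp: algebra_simps intro!: always_eventually)
qed

lemma tends_neg: "tends f x F \<Longrightarrow> tends (\<lambda>t. - f t) (- x) F"
  unfolding ftends_def by (simp add: minus_diff_minus P_commute[of _ x])

lemma tends_diff: "tends f x F \<Longrightarrow> tends g y F \<Longrightarrow> tends (\<lambda>t. f t - g t) (x - y) F"
proof -
  assume a: "tends f x F" "tends g y F"
  show ?thesis using tends_add[OF a(1) tends_neg[OF a(2)]] by (simp only: diff_conv_add_uminus)
qed

lemma tends_sc: "tends f x F \<Longrightarrow> tends (\<lambda>t. sc c (f t)) (sc c x) F"
  unfolding ftends_def
proof
  fix n assume "\<forall>n. ((\<lambda>t. P n (f t - x)) \<longlongrightarrow> 0) F"
  then have "((\<lambda>t. cmod c * P n (f t - x)) \<longlongrightarrow> 0) F"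
    using tendsto_mult_right_zero by blast
  then show "((\<lambda>t. P n (sc c (f t) - sc c x)) \<longlongrightarrow> 0) F"
    by (simp add: P_sc sc_diff[symmetric])
qed

lemma tends_eventually: "\<forall>\<^sub>F t in F. f t = g t \<Longrightarrow> tends f x F \<Longrightarrow> tends g x F"
  unfolding ftends_def
  by (auto elim!: tendsto_cong[THEN iffD1, rotated] eventually_mono)

definition ebd :: "('a \<Rightarrow> 'a) set \<Rightarrow> bool" where
  "ebd S \<longleftrightarrow> (\<forall>n. \<exists>m C. C \<ge> 0 \<and> (\<forall>B\<in>S. \<forall>x. P n (B x) \<le> C * P m x))"

lemma cont_seminorm_P: "cont_seminorm sc P (P n)"
proof -
  have "\<forall>x. P n x \<le> 1 * P n x" by simp
  then show ?thesis unfolding cont_seminorm_def using semi by blast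
qed

lemma equicont_iff: "equicont sc P S \<longleftrightarrow> ebd S"
proof
  assume e: "equicont sc P S"
  show "ebd S" unfolding ebd_def
  proof
    fix n
    obtain p C where p: "cont_seminorm sc P p" "C \<ge> 0" "\<forall>B\<in>S. \<forall>x. P n (B x) \<le> C * p x"
      using e cont_seminorm_P[of n] unfolding equicont_def by blast
    obtain m C' where m: "\<forall>x. p x \<le> C' * P m x" using p(1) unfolding cont_seminorm_def by blast
    have "\<forall>B\<in>S. \<forall>x. P n (B x) \<le> (C * max C' 0) * P m x"
    proof (intro ballI allI)
      fix B x assume "B \<in> S"
      have "P n (B x) \<le> C * p x" using p(3) \<open>B \<in> S\<close> by blast
      also have "p x \<le> max C' 0 * P m x" using m[rule_format, of x] P_nonneg[of m x]
        by (smt (verit) mult_right_mono)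
      then have "C * p x \<le> C * (max C' 0 * P m x)" using p(2) by (rule mult_left_mono)
      finally show "P n (B x) \<le> (C * max C' 0) * P m x" by simp
    qed
    then show "\<exists>m C. C \<ge> 0 \<and> (\<forall>B\<in>S. \<forall>x. P n (B x) \<le> C * P m x)" using p(2)
      by (intro exI[of _ m] exI[of _ "C * max C' 0"]) auto
  qed
next
  assume e: "ebd S"
  show "equicont sc P S" unfolding equicont_def
  proof (intro allI impI)
    fix q assume q: "cont_seminorm sc P q"
    obtain n C0 where n: "\<forall>x. q x \<le> C0 * P n x" using q unfolding cont_seminorm_def by blast
    obtain m C where m: "C \<ge> 0" "\<forall>B\<in>S. \<forall>x. P n (B x) \<le> C * P m x" using e unfolding ebd_def by blast
    have "\<forall>B\<in>S. \<forall>x. q (B x) \<le> (max C0 0 * C) * P m x"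
    proof (intro ballI allI)
      fix B x assume "B \<in> S"
      have "q (B x) \<le> max C0 0 * P n (B x)" using n[rule_format, of "B x"] P_nonneg[of n "B x"]
        by (smt (verit) mult_right_mono)
      also have "\<dots> \<le> max C0 0 * (C * P m x)" using m(2) \<open>B \<in> S\<close> by (intro mult_left_mono) auto
      finally show "q (B x) \<le> (max C0 0 * C) * P m x" by simp
    qed
    then show "\<exists>p C. cont_seminorm sc P p \<and> 0 \<le> C \<and> (\<forall>B\<in>S. \<forall>x. q (B x) \<le> C * p x)"
      using m(1) cont_seminorm_P[of m] by (intro exI[of _ "P m"] exI[of _ "max C0 0 * C"]) auto
  qed
qed

lemma ebd_single: "ebd {B} \<longleftrightarrow> (\<forall>n. \<exists>m C. C \<ge> 0 \<and> (\<forall>x. P n (B x) \<le> C * P m x))"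
  unfolding ebd_def by auto

lemma ebdD: "ebd S \<Longrightarrow> \<exists>m C. C \<ge> 0 \<and> (\<forall>B\<in>S. \<forall>x. P n (B x) \<le> C * P m x)"
  unfolding ebd_def by auto

lemma ebd_subset: "ebd S \<Longrightarrow> T \<subseteq> S \<Longrightarrow> ebd T"
  unfolding ebd_def by (meson subsetD)

lemma ebd_comp: "ebd S1 \<Longrightarrow> ebd S2 \<Longrightarrow> ebd {a \<circ> b | a b. a \<in> S1 \<and> b \<in> S2}"
  unfolding ebd_def
proof (intro allI)
  fix n assume e: "\<forall>n. \<exists>m C. 0 \<le> C \<and> (\<forall>B\<in>S1. \<forall>x. P n (B x) \<le> C * P m x)"
     "\<forall>n. \<exists>m C. 0 \<le> C \<and> (\<forall>B\<in>S2. \<forall>x. P n (B x) \<le> C * P m x)"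
  obtain m1 C1 where 1: "C1 \<ge> 0" "\<forall>B\<in>S1. \<forall>x. P n (B x) \<le> C1 * P m1 x" using e(1) by blast
  obtain m2 C2 where 2: "C2 \<ge> 0" "\<forall>B\<in>S2. \<forall>x. P m1 (B x) \<le> C2 * P m2 x" using e(2) by blast
  have "\<forall>B\<in>{a \<circ> b | a b. a \<in> S1 \<and> b \<in> S2}. \<forall>x. P n (B x) \<le> (C1 * C2) * P m2 x"
  proof (intro ballI allI)
    fix B x assume "B \<in> {a \<circ> b | a b. a \<in> S1 \<and> b \<in> S2}"
    then obtain a b where ab: "B = a \<circ> b" "a \<in> S1" "b \<in> S2" by blast
    have "P n (a (b x)) \<le> C1 * P m1 (b x)" using 1 ab by blast
    also have "\<dots> \<le> C1 * (C2 * P m2 x)" using 1 2 ab by (intro mult_left_mono) auto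
    finally show "P n (B x) \<le> (C1 * C2) * P m2 x" using ab by simp
  qed
  then show "\<exists>m C. 0 \<le> C \<and> (\<forall>B\<in>{a \<circ> b | a b. a \<in> S1 \<and> b \<in> S2}. \<forall>x. P n (B x) \<le> C * P m x)"
    using 1 2 by (intro exI[of _ m2] exI[of _ "C1 * C2"]) auto
qed

abbreviation "lin \<equiv> Vector_Spaces.linear sc sc"

lemma lin_iff: "lin B \<longleftrightarrow> (\<forall>x y. B (x + y) = B x + B y) \<and> (\<forall>c x. B (sc c x) = sc c (B x))"
  unfolding Vector_Spaces.linear_iff using vs by auto

lemma lin_add: "lin B \<Longrightarrow> B (x + y) = B x + B y" using lin_iff by blast
lemma lin_sc: "lin B \<Longrightarrow> B (sc c x) = sc c (B x)" using lin_iff by blast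
lemma lin_0: "lin B \<Longrightarrow> B 0 = 0" using lin_sc[of B 0 0] by simp
lemma lin_neg: "lin B \<Longrightarrow> B (- x) = - B x" using lin_sc[of B "-1" x] by simp
lemma lin_diff: "lin B \<Longrightarrow> B (x - y) = B x - B y"
  using lin_add[of B x "-y"] lin_neg[of B y] by simp
lemma lin_sum: "lin B \<Longrightarrow> B (sum f S) = (\<Sum>i\<in>S. B (f i))"
  by (induction S rule: infinite_finite_induct) (auto simp: lin_add lin_0)
lemma lin_comp: "lin B \<Longrightarrow> lin C \<Longrightarrow> lin (B \<circ> C)"
  unfolding lin_iff by auto
lemma lin_id: "lin id" unfolding lin_iff by auto
lemma lin_pow: "lin B \<Longrightarrow> lin (B ^^ k)"
  by (induction k) (auto simp: lin_id lin_comp)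
lemma lin_scB: "lin B \<Longrightarrow> lin (\<lambda>x. sc c (B x))"
  unfolding lin_iff by (auto simp: V.scale_right_distrib mult.commute)

lemma Lop_iff: "B \<in> Lop sc P \<longleftrightarrow> lin B \<and> ebd {B}"
  unfolding Lop_def by (simp add: equicont_iff)

lemma bounded_tends:
  assumes "ebd {B}" "lin B" "tends f x F"
  shows "tends (\<lambda>t. B (f t)) (B x) F"
proof (rule tendsI)
  fix n
  obtain m C where mC: "C \<ge> 0" "\<forall>x. P n (B x) \<le> C * P m x" using assms(1) unfolding ebd_def by blast
  show "\<exists>b. (b \<longlongrightarrow> 0) F \<and> (\<forall>\<^sub>F t in F. P n (B (f t) - B x) \<le> b t)"
    apply (rule exI[of _ "\<lambda>t. C * P m (f t - x)"])
    using tendsto_mult_right_zero[OF tendsD[OF assms(3), of m], of C] mC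
    by (auto simp: lin_diff[OF assms(2), symmetric] intro!: always_eventually)
qed

end


definition K :: "complex fps \<Rightarrow> bool" where
  "K f \<longleftrightarrow> summable (\<lambda>k. cmod (fps_nth f k))"

definition N1 :: "complex fps \<Rightarrow> real" where
  "N1 f = (\<Sum>k. cmod (fps_nth f k))"

definition tl1 :: "complex fps \<Rightarrow> nat \<Rightarrow> real" where
  "tl1 f N = (\<Sum>k. cmod (fps_nth f (k + N)))"

lemma N1_nonneg: "K f \<Longrightarrow> 0 \<le> N1 f"
  unfolding K_def N1_def by (auto intro: suminf_nonneg)

lemma tl1_nonneg: "K f \<Longrightarrow> 0 \<le> tl1 f N"
  unfolding K_def tl1_def by (auto intro!: suminf_nonneg summable_ignore_initial_segment)

lemma tl1_0: "tl1 f 0 = N1 f" unfolding tl1_def N1_def by simp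

lemma tl1_eq: "K f \<Longrightarrow> tl1 f N = N1 f - (\<Sum>k<N. cmod (fps_nth f k))"
  unfolding K_def tl1_def N1_def by (rule suminf_minus_initial_segment)

lemma tl1_lim: "K f \<Longrightarrow> (\<lambda>N. tl1 f N) \<longlonglongrightarrow> 0"
proof -
  assume k: "K f"
  have "(\<lambda>N. N1 f - (\<Sum>k<N. cmod (fps_nth f k))) \<longlonglongrightarrow> N1 f - N1 f"
    using k unfolding K_def N1_def by (intro tendsto_diff tendsto_const summable_LIMSEQ)
  then show ?thesis using tl1_eq[OF k] by simp
qed

lemma sum_ivl_le_tl1:
  assumes "K f" shows "(\<Sum>k\<in>{N..<M}. cmod (fps_nth f k)) \<le> tl1 f N"
proof -
  have "(\<Sum>k\<in>{N..<M}. cmod (fps_nth f k)) = (\<Sum>k\<in>{0..<M-N}. cmod (fps_nth f (k + N)))"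
  proof (cases "N \<le> M")
    case True
    then show ?thesis using sum.shift_bounds_nat_ivl[of "\<lambda>k. cmod (fps_nth f k)" 0 N "M - N"] by simp
  qed simp
  also have "\<dots> \<le> tl1 f N" unfolding tl1_def
    using assms unfolding K_def by (intro sum_le_suminf summable_ignore_initial_segment) auto
  finally show ?thesis .
qed

lemma K_add: "K f \<Longrightarrow> K g \<Longrightarrow> K (f + g)"
  unfolding K_def by (rule summable_comparison_test[of _ "\<lambda>k. cmod (fps_nth f k) + cmod (fps_nth g k)"])
    (auto intro!: summable_add norm_triangle_ineq)
lemma K_neg: "K f \<Longrightarrow> K (- f)" unfolding K_def by simp
lemma K_diff: "K f \<Longrightarrow> K g \<Longrightarrow> K (f - g)" using K_add[of f "-g"] K_neg[of g] by simp
lemma K_cmult: "K f \<Longrightarrow> K (fps_const c * f)"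
  unfolding K_def by (simp add: norm_mult summable_mult)
lemma K_one: "K 1" unfolding K_def
  by (rule summable_comparison_test[of _ "\<lambda>k. if k = 0 then 1 else 0"]) auto
lemma K_const: "K (fps_const c)"
  using K_cmult[OF K_one, of c] by simp
lemma K_X: "K f \<Longrightarrow> K (fps_X * f)"
proof -
  assume "K f"
  then have "summable (\<lambda>k. cmod (fps_nth f k))" unfolding K_def .
  then have "summable (\<lambda>k. cmod (fps_nth f (k - 1)))"
    using summable_iff_shift[of "\<lambda>k. cmod (fps_nth f (k - 1))" 1] by simp
  then show ?thesis unfolding K_def
    by (rule summable_comparison_test[rotated]) auto
qed
lemma K_Xpow: "K f \<Longrightarrow> K (fps_X ^ n * f)"
  by (induction n) (auto simp: mult.assoc K_X)

lemma N1_cmult: "K f \<Longrightarrow> N1 (fps_const c * f) = cmod c * N1 f"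
  unfolding N1_def K_def by (simp add: norm_mult suminf_mult)

lemma N1_one: "N1 1 = 1"
proof -
  have "(\<lambda>k. cmod (fps_nth (1::complex fps) k)) = (\<lambda>k. if k = 0 then 1 else 0)" by auto
  moreover have "(\<lambda>k. if k = 0 then 1 else 0) sums (1::real)"
    using sums_single[of 0 "\<lambda>_. 1::real"] by simp
  ultimately show ?thesis unfolding N1_def by (simp add: sums_iff)
qed

lemma K_mult_N1:
  assumes f: "K f" and g: "K g"
  shows "K (f * g) \<and> N1 (f * g) \<le> N1 f * N1 g"
proof -
  define a where "a k = cmod (fps_nth f k)" for k
  define b where "b k = cmod (fps_nth g k)" for k
  have sa: "summable (\<lambda>k. norm (a k))" and sb: "summable (\<lambda>k. norm (b k))"
    using f g unfolding K_def a_def b_def by auto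
  have le: "cmod (fps_nth (f * g) k) \<le> (\<Sum>i\<le>k. a i * b (k - i))" for k
  proof -
    have "cmod (fps_nth (f * g) k) = cmod (\<Sum>i\<le>k. fps_nth f i * fps_nth g (k - i))"
      by (simp add: fps_mult_nth atLeast0AtMost)
    also have "\<dots> \<le> (\<Sum>i\<le>k. cmod (fps_nth f i * fps_nth g (k - i)))" by (rule norm_sum)
    finally show ?thesis by (simp add: a_def b_def norm_mult)
  qed
  have sc: "summable (\<lambda>k. \<Sum>i\<le>k. a i * b (k - i))" by (rule summable_Cauchy_product[OF sa sb])
  have s: "summable (\<lambda>k. cmod (fps_nth (f * g) k))"
    by (rule summable_comparison_test[OF _ sc]) (use le in auto)
  have "N1 (f * g) \<le> (\<Sum>k. \<Sum>i\<le>k. a i * b (k - i))"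
    unfolding N1_def by (rule suminf_le[OF le s sc])
  also have "\<dots> = (\<Sum>k. a k) * (\<Sum>k. b k)" by (rule Cauchy_product[OF sa sb, symmetric])
  finally show ?thesis using s unfolding K_def N1_def a_def b_def by simp
qed

lemma N1_pow: "K f \<Longrightarrow> K (f ^ n) \<and> N1 (f ^ n) \<le> N1 f ^ n"
proof (induction n)
  case 0 then show ?case by (simp add: K_one N1_one)
next
  case (Suc n)
  then have "K (f * f ^ n) \<and> N1 (f * f ^ n) \<le> N1 f * N1 (f ^ n)" using K_mult_N1 by blast
  moreover have "N1 f * N1 (f ^ n) \<le> N1 f * N1 f ^ n"
    using Suc N1_nonneg by (intro mult_left_mono) auto
  ultimately show ?case by simp
qed

definition tr :: "nat \<Rightarrow> complex fps \<Rightarrow> complex fps" where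
  "tr N f = Abs_fps (\<lambda>k. if k < N then fps_nth f k else 0)"

lemma tr_0: "tr 0 f = 0" unfolding tr_def by (simp add: fps_eq_iff)
lemma tr_Suc: "tr (Suc N) f = tr N f + fps_const (fps_nth f N) * fps_X ^ N"
  unfolding tr_def by (auto simp: fps_eq_iff less_Suc_eq)
lemma K_tr: "K (tr N f)"
  unfolding K_def tr_def
  by (rule summable_comparison_test[of _ "\<lambda>k. if k < N then cmod (fps_nth f k) else 0"])
    (auto intro: summable_If_finite[of "\<lambda>k. k < N", simplified])
lemma N1_rest: "K f \<Longrightarrow> K (f - tr N f) \<and> N1 (f - tr N f) = tl1 f N"
proof -
  assume k: "K f"
  have kk: "K (f - tr N f)" using K_diff[OF k K_tr] .
  define b where "b k = cmod (fps_nth (f - tr N f) k)" for k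
  have sb: "summable b" using kk unfolding b_def K_def .
  have "(\<Sum>k. b (k + N)) = (\<Sum>k. b k) - (\<Sum>i<N. b i)" by (rule suminf_minus_initial_segment[OF sb])
  moreover have "(\<Sum>i<N. b i) = 0" unfolding b_def tr_def by simp
  moreover have "b (k + N) = cmod (fps_nth f (k + N))" for k unfolding b_def tr_def by simp
  ultimately show ?thesis using kk unfolding N1_def tl1_def b_def by simp
qed

locale calc = fr +
  fixes A :: "'a \<Rightarrow> 'a"
  assumes linA: "lin A" and powb: "ebd (range (\<lambda>k. A ^^ k))"
begin

lemma powbD: "\<exists>m C. C \<ge> 0 \<and> (\<forall>k x. P n ((A ^^ k) x) \<le> C * P m x)"
  using ebdD[OF powb, of n] by auto

lemma linpow: "lin (A ^^ k)" using lin_pow[OF linA] .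

lemma A_ebd: "ebd {A}"
proof -
  have "A \<in> range (\<lambda>k. A ^^ k)" by (rule range_eqI[of _ _ 1]) simp
  then show ?thesis using ebd_subset[OF powb, of "{A}"] by auto
qed

definition Sp :: "complex fps \<Rightarrow> nat \<Rightarrow> 'a \<Rightarrow> 'a" where
  "Sp f N x = (\<Sum>k<N. sc (fps_nth f k) ((A ^^ k) x))"

definition F :: "complex fps \<Rightarrow> 'a \<Rightarrow> 'a" where
  "F f x = (THE y. tends (\<lambda>N. Sp f N x) y sequentially)"

lemma sum_bound: "\<exists>m C. C \<ge> 0 \<and> (\<forall>f S x. P n (\<Sum>k\<in>S. sc (fps_nth f k) ((A ^^ k) x)) \<le> (\<Sum>k\<in>S. cmod (fps_nth f k)) * C * P m x)"
proof -
  obtain m C where mC: "C \<ge> 0" "\<forall>k x. P n ((A ^^ k) x) \<le> C * P m x" using powbD by blast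
  have "P n (\<Sum>k\<in>S. sc (fps_nth f k) ((A ^^ k) x)) \<le> (\<Sum>k\<in>S. cmod (fps_nth f k)) * C * P m x" for f S x
  proof -
    have "P n (\<Sum>k\<in>S. sc (fps_nth f k) ((A ^^ k) x)) \<le> (\<Sum>k\<in>S. P n (sc (fps_nth f k) ((A ^^ k) x)))"
      by (rule P_sum)
    also have "\<dots> \<le> (\<Sum>k\<in>S. cmod (fps_nth f k) * (C * P m x))"
      using mC by (intro sum_mono) (auto simp: P_sc intro!: mult_left_mono)
    finally show ?thesis by (simp add: sum_distrib_right mult.assoc)
  qed
  then show ?thesis using mC by blast
qed

lemma Sp_diff: "N \<le> M \<Longrightarrow> Sp f M x - Sp f N x = (\<Sum>k\<in>{N..<M}. sc (fps_nth f k) ((A ^^ k) x))"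
proof -
  assume "N \<le> M"
  then have "(\<Sum>k<M. sc (fps_nth f k) ((A ^^ k) x)) = (\<Sum>k<N. sc (fps_nth f k) ((A ^^ k) x)) + (\<Sum>k\<in>{N..<M}. sc (fps_nth f k) ((A ^^ k) x))"
    using sum.atLeastLessThan_concat[of 0 N M "\<lambda>k. sc (fps_nth f k) ((A ^^ k) x)"] by (simp add: atLeast0LessThan)
  then show ?thesis unfolding Sp_def by simp
qed

lemma Sp_tends: "K f \<Longrightarrow> \<exists>y. tends (\<lambda>N. Sp f N x) y sequentially"
proof (rule complete)
  fix n and \<epsilon> :: real assume k: "K f" and e: "\<epsilon> > 0"
  obtain m C where mC: "C \<ge> 0" "\<forall>f S x. P n (\<Sum>k\<in>S. sc (fps_nth f k) ((A ^^ k) x)) \<le> (\<Sum>k\<in>S. cmod (fps_nth f k)) * C * P m x"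
    using sum_bound by blast
  define D where "D = C * P m x + 1"
  have D: "D > 0" unfolding D_def using mC by (simp add: add_nonneg_pos)
  obtain N where N: "\<forall>i\<ge>N. \<forall>j. norm (\<Sum>k\<in>{i..<j}. cmod (fps_nth f k)) < \<epsilon> / D"
    using k[unfolded K_def, unfolded summable_Cauchy] e D by (meson divide_pos_pos)
  have main: "P n (Sp f i x - Sp f j x) < \<epsilon>" if "j \<le> i" "N \<le> j" for i j
  proof -
    have "P n (Sp f i x - Sp f j x) \<le> (\<Sum>k\<in>{j..<i}. cmod (fps_nth f k)) * C * P m x"
      using mC Sp_diff[OF that(1)] by simp
    also have "\<dots> \<le> (\<Sum>k\<in>{j..<i}. cmod (fps_nth f k)) * D"
      unfolding D_def using mC by (simp add: mult.assoc sum_nonneg mult_left_mono)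
    also have "\<dots> < \<epsilon>"
      using N[rule_format, OF that(2), of i] D by (simp add: pos_less_divide_eq sum_nonneg)
    finally show ?thesis .
  qed
  show "\<exists>N. \<forall>i\<ge>N. \<forall>j\<ge>N. P n (Sp f i x - Sp f j x) < \<epsilon>"
  proof (intro exI[of _ N] allI impI)
    fix i j assume "N \<le> i" "N \<le> j"
    then show "P n (Sp f i x - Sp f j x) < \<epsilon>"
      using main[of j i] main[of i j] P_commute[of n "Sp f i x" "Sp f j x"] by (cases "j \<le> i") auto
  qed
qed

lemma F_tends: "K f \<Longrightarrow> tends (\<lambda>N. Sp f N x) (F f x) sequentially"
  unfolding F_def using Sp_tends tends_unique
  by (metis (mono_tags, lifting) theI trivial_limit_sequentially)

lemma F_eqI: "K f \<Longrightarrow> tends (\<lambda>N. Sp f N x) y sequentially \<Longrightarrow> F f x = y"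
  using F_tends tends_unique trivial_limit_sequentially by blast

lemma F_bnd: "\<exists>m C. C \<ge> 0 \<and> (\<forall>f x N. K f \<longrightarrow> P n (F f x - Sp f N x) \<le> tl1 f N * C * P m x)"
proof -
  obtain m C where mC: "C \<ge> 0" "\<forall>f S x. P n (\<Sum>k\<in>S. sc (fps_nth f k) ((A ^^ k) x)) \<le> (\<Sum>k\<in>S. cmod (fps_nth f k)) * C * P m x"
    using sum_bound by blast
  have "P n (F f x - Sp f N x) \<le> tl1 f N * C * P m x" if k: "K f" for f x N
  proof -
    have lim: "(\<lambda>M. P n (F f x - Sp f M x) + tl1 f N * C * P m x) \<longlonglongrightarrow> 0 + tl1 f N * C * P m x"
      using tendsD[OF F_tends[OF k, of x], of n] P_commute[of n]
      by (intro tendsto_add tendsto_const) (simp add: P_commute[of n _ "F f x"])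
    have ev: "\<forall>\<^sub>F M in sequentially. P n (F f x - Sp f N x) \<le> P n (F f x - Sp f M x) + tl1 f N * C * P m x"
    proof (rule eventually_sequentiallyI[of N])
      fix M assume "N \<le> M"
      have "P n (Sp f M x - Sp f N x) \<le> (\<Sum>k\<in>{N..<M}. cmod (fps_nth f k)) * C * P m x"
        using mC Sp_diff[OF \<open>N \<le> M\<close>] by simp
      also have "\<dots> \<le> tl1 f N * C * P m x"
        using mC sum_ivl_le_tl1[OF k] by (simp add: mult.assoc mult_right_mono)
      finally show "P n (F f x - Sp f N x) \<le> P n (F f x - Sp f M x) + tl1 f N * C * P m x"
        using P_tri_diff[where n=n and x="F f x" and y="Sp f M x" and z="Sp f N x"] by linarith
    qed
    show ?thesis using tendsto_le[OF trivial_limit_sequentially lim tendsto_const ev] by simp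
  qed
  then show ?thesis using mC by blast
qed

lemma Sp_0: "Sp f 0 x = 0" unfolding Sp_def by simp

lemma F_bound: "\<exists>m C. C \<ge> 0 \<and> (\<forall>f x. K f \<longrightarrow> P n (F f x) \<le> N1 f * C * P m x)"
  using F_bnd[of n] by (metis Sp_0 diff_zero tl1_0)

lemma Sp_add_x: "Sp f N (x + y) = Sp f N x + Sp f N y"
  unfolding Sp_def by (simp add: lin_add[OF linpow] V.scale_right_distrib sum.distrib)
lemma Sp_sc_x: "Sp f N (sc c x) = sc c (Sp f N x)"
  unfolding Sp_def V.scale_sum_right by (intro sum.cong refl) (simp add: lin_sc[OF linpow] mult.commute)

lemma F_add_x: "K f \<Longrightarrow> F f (x + y) = F f x + F f y"
  by (rule F_eqI) (auto simp: Sp_add_x intro!: tends_add F_tends)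
lemma F_sc_x: "K f \<Longrightarrow> F f (sc c x) = sc c (F f x)"
  by (rule F_eqI) (auto simp: Sp_sc_x intro!: tends_sc F_tends)

lemma F_lin: "K f \<Longrightarrow> lin (F f)"
  unfolding lin_iff by (auto simp: F_add_x F_sc_x)

lemma F_ebd: "K f \<Longrightarrow> ebd {F f}"
  unfolding ebd_single
proof
  fix n assume k: "K f"
  obtain m C where mC: "C \<ge> 0" "\<forall>f x. K f \<longrightarrow> P n (F f x) \<le> N1 f * C * P m x" using F_bound by blast
  then show "\<exists>m C. 0 \<le> C \<and> (\<forall>x. P n (F f x) \<le> C * P m x)" using N1_nonneg[OF k] k
    by (intro exI[of _ m] exI[of _ "N1 f * C"]) auto
qed

lemma F_Lop: "K f \<Longrightarrow> F f \<in> Lop sc P"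
  by (simp add: Lop_iff F_lin F_ebd)

lemma Sp_add_f: "Sp (f + g) N x = Sp f N x + Sp g N x"
  unfolding Sp_def by (simp add: V.scale_left_distrib sum.distrib)
lemma Sp_cmult: "Sp (fps_const c * f) N x = sc c (Sp f N x)"
  unfolding Sp_def V.scale_sum_right V.scale_scale fps_mult_left_const_nth by (rule refl)

lemma F_add: "K f \<Longrightarrow> K g \<Longrightarrow> F (f + g) x = F f x + F g x"
  by (rule F_eqI) (auto simp: Sp_add_f K_add intro!: tends_add F_tends)
lemma F_cmult: "K f \<Longrightarrow> F (fps_const c * f) x = sc c (F f x)"
  by (rule F_eqI) (auto simp: Sp_cmult K_cmult intro!: tends_sc F_tends)
lemma F_neg: "K f \<Longrightarrow> F (- f) x = - F f x"
  using F_cmult[of f "-1" x] by (simp flip: fps_const_neg)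
lemma F_diff: "K f \<Longrightarrow> K g \<Longrightarrow> F (f - g) x = F f x - F g x"
  using F_add[of f "-g" x] F_neg[of g x] K_neg[of g] by simp

lemma F_zero: "F 0 x = 0"
  using F_cmult[OF K_one, of 0 x] by simp

lemma F_one: "F 1 x = x"
proof (rule F_eqI[OF K_one])
  have "Sp 1 N x = x" if "N \<ge> 1" for N
  proof -
    have "Sp 1 N x = (\<Sum>k\<in>{0}. sc (fps_nth (1::complex fps) k) ((A ^^ k) x))"
      unfolding Sp_def by (rule sum.mono_neutral_right) (use that in auto)
    then show ?thesis by simp
  qed
  then show "tends (\<lambda>N. Sp 1 N x) x sequentially"
    by (intro tends_eventually[OF _ tends_const]) (auto intro: eventually_sequentiallyI[of 1])
qed

lemma F_const: "F (fps_const c) x = sc c x"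
  using F_cmult[OF K_one, of c x] F_one by simp

lemma tends_Suc: "tends g y sequentially \<Longrightarrow> tends (\<lambda>N. g (Suc N)) y sequentially"
  unfolding ftends_def by (auto intro: LIMSEQ_Suc)

lemma F_X: "K f \<Longrightarrow> F (fps_X * f) x = A (F f x)"
proof -
  assume k: "K f"
  have eq: "Sp (fps_X * f) (Suc N) x = A (Sp f N x)" for N
  proof -
    have "Sp (fps_X * f) (Suc N) x = (\<Sum>k<N. sc (fps_nth f k) ((A ^^ Suc k) x))"
      unfolding Sp_def by (subst sum.lessThan_Suc_shift) simp
    also have "\<dots> = A (Sp f N x)"
      unfolding Sp_def by (simp add: lin_sum[OF linA] lin_sc[OF linA])
    finally show ?thesis .
  qed
  have t1: "tends (\<lambda>N. A (Sp f N x)) (F (fps_X * f) x) sequentially"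
    using tends_Suc[OF F_tends[OF K_X[OF k]], of x] unfolding eq .
  have t2: "tends (\<lambda>N. A (Sp f N x)) (A (F f x)) sequentially"
    by (rule bounded_tends[OF A_ebd linA F_tends[OF k]])
  show ?thesis by (rule tends_unique[OF trivial_limit_sequentially t1 t2])
qed

lemma F_Xpow: "K f \<Longrightarrow> F (fps_X ^ n * f) x = (A ^^ n) (F f x)"
proof (induction n)
  case 0 then show ?case by simp
next
  case (Suc n)
  have "F (fps_X ^ Suc n * f) x = F (fps_X * (fps_X ^ n * f)) x" by (simp add: mult.assoc)
  also have "\<dots> = A (F (fps_X ^ n * f) x)" by (rule F_X[OF K_Xpow[OF Suc.prems]])
  finally show ?case using Suc by simp
qed

lemma F_tr_mult: "K g \<Longrightarrow> F (tr N f * g) x = Sp f N (F g x)"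
proof (induction N)
  case 0 then show ?case by (simp add: tr_0 F_zero Sp_0)
next
  case (Suc N)
  have "tr (Suc N) f * g = tr N f * g + fps_const (fps_nth f N) * (fps_X ^ N * g)"
    by (simp add: tr_Suc algebra_simps)
  then have "F (tr (Suc N) f * g) x = F (tr N f * g) x + sc (fps_nth f N) ((A ^^ N) (F g x))"
    using Suc.prems
    by (simp add: F_add K_mult_N1[OF K_tr] K_cmult K_Xpow F_cmult F_Xpow)
  then show ?case using Suc by (simp add: Sp_def)
qed

lemma F_mult: assumes f: "K f" and g: "K g" shows "F (f * g) x = F f (F g x)"
proof -
  have "tends (\<lambda>N. F (tr N f * g) x) (F (f * g) x) sequentially"
  proof (rule tendsI)
    fix n
    obtain m C where mC: "C \<ge> 0" "\<forall>f x. K f \<longrightarrow> P n (F f x) \<le> N1 f * C * P m x" using F_bound by blast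
    show "\<exists>b. (b \<longlonglongrightarrow> 0) \<and> (\<forall>\<^sub>F N in sequentially. P n (F (tr N f * g) x - F (f * g) x) \<le> b N)"
    proof (intro exI conjI)
      show "(\<lambda>N. tl1 f N * (N1 g * C * P m x)) \<longlonglongrightarrow> 0"
        using tendsto_mult_left_zero[OF tl1_lim[OF f], of "N1 g * C * P m x"] by simp
      show "\<forall>\<^sub>F N in sequentially. P n (F (tr N f * g) x - F (f * g) x) \<le> tl1 f N * (N1 g * C * P m x)"
      proof (intro always_eventually allI)
        fix N
        have kr: "K (f - tr N f)" and nr: "N1 (f - tr N f) = tl1 f N" using N1_rest[OF f] by auto
        have km: "K ((f - tr N f) * g)" "N1 ((f - tr N f) * g) \<le> tl1 f N * N1 g"
          using K_mult_N1[OF kr g] nr by auto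
        have "F (tr N f * g) x - F (f * g) x = - F ((f - tr N f) * g) x"
          using F_diff[OF K_mult_N1[OF f g, THEN conjunct1] K_mult_N1[OF K_tr g, THEN conjunct1]]
          by (simp add: algebra_simps)
        then have "P n (F (tr N f * g) x - F (f * g) x) = P n (F ((f - tr N f) * g) x)" by simp
        also have "\<dots> \<le> N1 ((f - tr N f) * g) * C * P m x" using mC km by blast
        also have "\<dots> \<le> tl1 f N * N1 g * C * P m x"
          using km mC by (intro mult_right_mono) auto
        finally show "P n (F (tr N f * g) x - F (f * g) x) \<le> tl1 f N * (N1 g * C * P m x)" by (simp add: mult.assoc)
      qed
    qed
  qed
  moreover have "tends (\<lambda>N. F (tr N f * g) x) (F f (F g x)) sequentially"
    using F_tends[OF f, of "F g x"] F_tr_mult[OF g] by simp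
  ultimately show ?thesis using tends_unique trivial_limit_sequentially by blast
qed

lemma F_commute:
  assumes S: "lin S" "ebd {S}" "\<And>x. S (A x) = A (S x)" and f: "K f"
  shows "S (F f x) = F f (S x)"
proof -
  have pw: "S ((A ^^ k) x) = (A ^^ k) (S x)" for k x by (induction k) (auto simp: S(3))
  have "S (Sp f N x) = Sp f N (S x)" for N
    unfolding Sp_def by (simp add: lin_sum[OF S(1)] lin_sc[OF S(1)] pw)
  then have "tends (\<lambda>N. Sp f N (S x)) (S (F f x)) sequentially"
    using bounded_tends[OF S(2) S(1) F_tends[OF f, of x]] by simp
  then show ?thesis using F_eqI[OF f] by simp
qed

lemma F_commA: "K f \<Longrightarrow> F f (A x) = A (F f x)"
proof -
  assume f: "K f"
  have "F f (A x) = F f (F fps_X x)" using F_X[OF K_one, of x] F_one by simp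
  also have "\<dots> = F (f * fps_X) x" using F_mult[OF f K_X[OF K_one]] by simp
  also have "\<dots> = F (fps_X * f) x" by (simp add: mult.commute)
  also have "\<dots> = A (F f x)" by (rule F_X[OF f])
  finally show ?thesis .
qed

lemma funpow_commute: "g \<circ> h = h \<circ> g \<Longrightarrow> (g \<circ> h) ^^ n = g ^^ n \<circ> h ^^ n"
proof -
  assume c: "g \<circ> h = h \<circ> g"
  have hc: "h \<circ> g ^^ n = g ^^ n \<circ> h" for n
  proof (induction n)
    case (Suc n)
    have "h \<circ> g ^^ Suc n = (h \<circ> g) \<circ> g ^^ n" by (simp add: comp_assoc)
    also have "\<dots> = (g \<circ> h) \<circ> g ^^ n" using c by simp
    also have "\<dots> = g \<circ> (h \<circ> g ^^ n)" by (simp add: comp_assoc)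
    also have "\<dots> = g \<circ> (g ^^ n \<circ> h)" by (rule arg_cong[OF Suc.IH])
    also have "\<dots> = g ^^ Suc n \<circ> h" by (simp add: comp_assoc)
    finally show ?case .
  qed simp
  show ?thesis
  proof (induction n)
    case (Suc n)
    have "(g \<circ> h) ^^ Suc n = (g \<circ> h) \<circ> (g \<circ> h) ^^ n" by simp
    also have "\<dots> = (g \<circ> h) \<circ> (g ^^ n \<circ> h ^^ n)" by (rule arg_cong[OF Suc.IH])
    also have "\<dots> = g \<circ> (h \<circ> g ^^ n) \<circ> h ^^ n" by (simp add: comp_assoc)
    also have "\<dots> = g ^^ Suc n \<circ> h ^^ Suc n" using hc by (simp add: comp_assoc funpow_Suc_right)
    finally show ?case .
  qed simp
qed

lemma L0_comp:
  assumes R: "R \<in> L0 sc P" and S: "S \<in> L0 sc P" and c: "\<And>x. R (S x) = S (R x)"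
  shows "(\<lambda>x. R (S x)) \<in> L0 sc P"
proof -
  have RL: "lin R" "ebd {R}" and SL: "lin S" "ebd {S}" using R S unfolding L0_def Lop_iff by auto
  obtain \<mu> where mu: "\<mu> \<noteq> 0" "ebd (range (\<lambda>n. (\<lambda>x. sc \<mu> (R x)) ^^ n))"
    using R unfolding L0_def equicont_iff by auto
  obtain \<nu> where nu: "\<nu> \<noteq> 0" "ebd (range (\<lambda>n. (\<lambda>x. sc \<nu> (S x)) ^^ n))"
    using S unfolding L0_def equicont_iff by auto
  define R' where "R' = (\<lambda>x. sc \<mu> (R x))"
  define S' where "S' = (\<lambda>x. sc \<nu> (S x))"
  have e1: "(\<lambda>x. sc (\<mu> * \<nu>) (R (S x))) = R' \<circ> S'"
    unfolding R'_def S'_def by (auto simp: lin_sc[OF RL(1)] mult.commute)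
  have e2: "R' \<circ> S' = S' \<circ> R'"
    unfolding R'_def S'_def by (auto simp: lin_sc[OF RL(1)] lin_sc[OF SL(1)] c mult.commute)
  have "range (\<lambda>n. (\<lambda>x. sc (\<mu> * \<nu>) (R (S x))) ^^ n) \<subseteq> {a \<circ> b | a b. a \<in> range (\<lambda>n. R' ^^ n) \<and> b \<in> range (\<lambda>n. S' ^^ n)}"
    unfolding e1 funpow_commute[OF e2] by blast
  then have "ebd (range (\<lambda>n. (\<lambda>x. sc (\<mu> * \<nu>) (R (S x))) ^^ n))"
    using ebd_subset[OF ebd_comp[OF mu(2)[folded R'_def] nu(2)[folded S'_def]]] by blast
  moreover have "lin (\<lambda>x. R (S x))" using lin_comp[OF RL(1) SL(1)] by (simp add: o_def)
  moreover have "ebd {\<lambda>x. R (S x)}"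
    using ebd_comp[OF RL(2) SL(2)] by (rule ebd_subset) (auto simp: o_def)
  ultimately show ?thesis unfolding L0_def Lop_iff equicont_iff using mu nu
    by (intro CollectI conjI exI[of _ "\<mu> * \<nu>"]) auto
qed

lemma F_L0: assumes f: "K f" shows "F f \<in> L0 sc P"
proof -
  define \<mu> :: complex where "\<mu> = complex_of_real (1 / (N1 f + 1))"
  have n0: "N1 f \<ge> 0" using N1_nonneg[OF f] .
  have mu0: "\<mu> \<noteq> 0" unfolding \<mu>_def of_real_eq_0_iff using n0 by simp
  have "cmod \<mu> = 1 / (N1 f + 1)" unfolding \<mu>_def norm_of_real using n0 by simp
  then have "cmod \<mu> * N1 f = N1 f / (N1 f + 1)" by simp
  then have cm: "cmod \<mu> * N1 f \<le> 1" using n0 by (simp add: divide_le_eq_1)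
  have pw: "((\<lambda>x. sc \<mu> (F f x)) ^^ n) x = F (fps_const (\<mu> ^ n) * f ^ n) x" for n x
  proof (induction n arbitrary: x)
    case 0 then show ?case using F_one by simp
  next
    case (Suc n)
    have kn: "K (fps_const (\<mu> ^ n) * f ^ n)" using K_cmult N1_pow[OF f] by blast
    have "((\<lambda>x. sc \<mu> (F f x)) ^^ Suc n) x = sc \<mu> (F f (F (fps_const (\<mu> ^ n) * f ^ n) x))"
      using Suc by simp
    also have "\<dots> = F (fps_const \<mu> * (f * (fps_const (\<mu> ^ n) * f ^ n))) x"
      using F_mult[OF f kn] F_cmult[OF K_mult_N1[OF f kn, THEN conjunct1]] by simp
    also have "fps_const \<mu> * (f * (fps_const (\<mu> ^ n) * f ^ n)) = fps_const (\<mu> ^ Suc n) * f ^ Suc n"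
      by (simp add: algebra_simps flip: fps_const_mult)
    finally show ?case .
  qed
  obtain bnd: "\<And>n. \<exists>m C. C \<ge> 0 \<and> (\<forall>f x. K f \<longrightarrow> P n (F f x) \<le> N1 f * C * P m x)" using F_bound by blast
  have "ebd (range (\<lambda>n. (\<lambda>x. sc \<mu> (F f x)) ^^ n))"
    unfolding ebd_def
  proof
    fix n
    obtain m C where mC: "C \<ge> 0" "\<forall>f x. K f \<longrightarrow> P n (F f x) \<le> N1 f * C * P m x" using bnd by blast
    have "P n (((\<lambda>x. sc \<mu> (F f x)) ^^ k) x) \<le> C * P m x" for k x
    proof -
      have kk: "K (f ^ k)" "N1 (f ^ k) \<le> N1 f ^ k" using N1_pow[OF f] by auto
      have "N1 (fps_const (\<mu> ^ k) * f ^ k) = cmod \<mu> ^ k * N1 (f ^ k)"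
        using N1_cmult[OF kk(1)] by (simp add: norm_power)
      also have "\<dots> \<le> cmod \<mu> ^ k * N1 f ^ k" using kk by (intro mult_left_mono) auto
      also have "\<dots> = (cmod \<mu> * N1 f) ^ k" by (simp add: power_mult_distrib)
      also have "\<dots> \<le> 1" using cm n0 by (intro power_le_one) auto
      finally have "N1 (fps_const (\<mu> ^ k) * f ^ k) \<le> 1" .
      moreover have "P n (F (fps_const (\<mu> ^ k) * f ^ k) x) \<le> N1 (fps_const (\<mu> ^ k) * f ^ k) * C * P m x"
        using mC K_cmult[OF kk(1)] by blast
      moreover have "N1 (fps_const (\<mu> ^ k) * f ^ k) * (C * P m x) \<le> 1 * (C * P m x)"
        using \<open>N1 (fps_const (\<mu> ^ k) * f ^ k) \<le> 1\<close> mC by (intro mult_right_mono) auto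
      ultimately show ?thesis unfolding pw by (simp add: mult.assoc)
    qed
    then show "\<exists>m C. 0 \<le> C \<and> (\<forall>B\<in>range (\<lambda>n. (\<lambda>x. sc \<mu> (F f x)) ^^ n). \<forall>x. P n (B x) \<le> C * P m x)"
      using mC by blast
  qed
  then show ?thesis unfolding L0_def equicont_iff using F_Lop[OF f] mu0 by blast
qed

end


section \<open>Complex analysis facts\<close>

lemma Kconv: "fps_conv_radius f > 1 \<Longrightarrow> K f"
proof -
  assume h: "fps_conv_radius f > 1"
  have "ereal (norm (1::complex)) < fps_conv_radius f" using h by (simp add: one_ereal_def)
  from norm_summable_fps[OF this] show ?thesis unfolding K_def by simp
qed

lemma K_fpsX: "K fps_X" using K_X[OF K_one] by simp

lemma K_exp: "K (fps_exp c)"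
  by (rule Kconv) simp

lemma log_unique:
  fixes w \<mu> :: complex
  assumes "exp w = exp \<mu>" "norm (w - \<mu>) < 6"
  shows "w = \<mu>"
proof -
  obtain n :: int where n: "w = \<mu> + (of_int (2 * n) * pi) * \<i>" using assms(1) exp_eq by blast
  have "w - \<mu> = complex_of_real (2 * real_of_int n * pi) * \<i>" using n by simp
  then have "norm (w - \<mu>) = \<bar>2 * real_of_int n * pi\<bar>" by (simp only: norm_mult norm_ii norm_of_real)
  also have "\<dots> = 2 * \<bar>real_of_int n\<bar> * pi" by (simp only: abs_mult abs_of_pos[OF pi_gt_zero])
  finally have e: "norm (w - \<mu>) = 2 * \<bar>real_of_int n\<bar> * pi" .
  show ?thesis
  proof (cases "n = 0")
    case True then show ?thesis using n by simp
  next
    case False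
    then have "\<bar>real_of_int n\<bar> \<ge> 1" by linarith
    then have "2 * \<bar>real_of_int n\<bar> * pi \<ge> 2 * 1 * pi" using pi_gt_zero by (intro mult_right_mono) auto
    then show ?thesis using e assms(2) pi_gt3 by linarith
  qed
qed

definition gq :: "complex \<Rightarrow> complex \<Rightarrow> complex" where
  "gq l = (\<lambda>z. if z = l then deriv (\<lambda>w. exp w - exp l) l
              else ((exp z - exp l) - (exp l - exp l)) / (z - l))"

lemma gq_holo: "gq l holomorphic_on UNIV"
  unfolding gq_def by (rule pole_lemma[where f = "\<lambda>w. exp w - exp l", simplified]) (auto intro!: holomorphic_intros)

lemma gq_at: "gq l l = exp l"
proof -
  have "((\<lambda>w. exp w - exp l) has_field_derivative exp l) (at l)"
    by (auto intro!: derivative_eq_intros)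
  then show ?thesis unfolding gq_def by (simp add: DERIV_imp_deriv)
qed

lemma gq_other: "z \<noteq> l \<Longrightarrow> gq l z = (exp z - exp l) / (z - l)"
  unfolding gq_def by simp

definition G :: "complex \<Rightarrow> complex fps" where
  "G l = fps_expansion (gq l) 0"

lemma G_radius: "fps_conv_radius (G l) = \<infinity>"
  using conv_radius_fps_expansion[of "gq l" 0 \<infinity>] gq_holo[of l] unfolding G_def by simp

lemma G_eval: "eval_fps (G l) z = gq l z"
  using eval_fps_expansion'[of "gq l" 0 \<infinity> z] gq_holo[of l] unfolding G_def by simp

lemma K_G: "K (G l)" by (rule Kconv) (simp add: G_radius)

lemma G_ident: "(fps_const l - fps_X) * G l = fps_const (exp l) - fps_exp 1"
proof (rule eval_fps_eqD)
  have r1: "fps_conv_radius (fps_const l - fps_X :: complex fps) = \<infinity>"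
    using fps_conv_radius_diff[of "fps_const l" "fps_X :: complex fps"] by simp
  show "fps_conv_radius ((fps_const l - fps_X) * G l) > 0"
    using fps_conv_radius_mult[of "fps_const l - fps_X" "G l"] r1 G_radius by simp
  show "fps_conv_radius (fps_const (exp l) - fps_exp 1 :: complex fps) > 0"
    using fps_conv_radius_diff[of "fps_const (exp l)" "fps_exp (1::complex)"] by simp
  have "eval_fps ((fps_const l - fps_X) * G l) z = eval_fps (fps_const (exp l) - fps_exp 1) z" for z
  proof -
    have "eval_fps ((fps_const l - fps_X) * G l) z = (l - z) * gq l z"
      using r1 G_radius by (simp add: eval_fps_mult eval_fps_diff G_eval)
    also have "\<dots> = exp l - exp z"
      by (cases "z = l") (auto simp: gq_other field_simps)
    also have "\<dots> = eval_fps (fps_const (exp l) - fps_exp 1) z"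
      by (simp add: eval_fps_diff)
    finally show ?thesis .
  qed
  then show "\<forall>\<^sub>F z in nhds 0. eval_fps ((fps_const l - fps_X) * G l) z = eval_fps (fps_const (exp l) - fps_exp 1) z"
    by simp
qed

lemma G_nonzero:
  assumes "norm l \<le> 1" "norm z < 3"
  shows "eval_fps (G l) z \<noteq> 0"
proof (cases "z = l")
  case True then show ?thesis by (simp add: G_eval gq_at)
next
  case False
  show ?thesis
  proof
    assume "eval_fps (G l) z = 0"
    then have "exp z = exp l" using False by (simp add: G_eval gq_other)
    moreover have "norm (z - l) < 6" using assms norm_triangle_ineq4[of z l] by linarith
    ultimately show False using log_unique False by blast
  qed
qed

lemma inverse_K:
  fixes g :: "complex fps" and \<rho> :: real
  assumes "\<rho> > 1" "fps_conv_radius g > 1" "\<And>z. norm z < \<rho> \<Longrightarrow> eval_fps g z \<noteq> 0"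
  shows "K (inverse g) \<and> g * inverse g = 1 \<and> inverse g * g = 1"
proof -
  have "fps_conv_radius (inverse g) \<ge> min (ereal \<rho>) (fps_conv_radius g)"
    by (rule fps_conv_radius_inverse) (use assms(3) in auto)
  moreover have "min (ereal \<rho>) (fps_conv_radius g) > 1" using assms(1,2) by simp
  ultimately have "fps_conv_radius (inverse g) > 1" by (meson less_le_trans)
  moreover have "fps_nth g 0 \<noteq> 0" using assms(3)[of 0] assms(1) by (simp add: eval_fps_at_0)
  ultimately show ?thesis using Kconv inverse_mult_eq_1 inverse_mult_eq_1' by blast
qed

lemma elog_Sup:
  fixes f :: "'b \<Rightarrow> real"
  shows "elog (Sup ((\<lambda>x. ereal (exp (f x))) ` S)) = Sup ((\<lambda>x. ereal (f x)) ` S)"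
proof (cases "S = {}")
  case True then show ?thesis by (simp add: elog_def bot_ereal_def)
next
  case ne: False
  define s where "s = Sup ((\<lambda>x. ereal (f x)) ` S)"
  define U where "U = Sup ((\<lambda>x. ereal (exp (f x))) ` S)"
  obtain x0 where x0: "x0 \<in> S" using ne by blast
  have s_ge: "ereal (f x0) \<le> s" unfolding s_def using x0 by (auto intro: SUP_upper)
  show ?thesis
  proof (cases s)
    case PInf
    have "U = \<infinity>" unfolding U_def top_ereal_def[symmetric] Sup_eq_top_iff
    proof (intro allI impI)
      fix y :: ereal assume "y < top"
      then have "y < \<infinity>" by (simp add: top_ereal_def)
      obtain M :: real where M: "y \<le> ereal M" using \<open>y < \<infinity>\<close>
        by (cases y) auto
      have "ereal M < s" using PInf by simp
      then obtain x where x: "x \<in> S" "ereal M < ereal (f x)" unfolding s_def less_Sup_iff by auto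
      have "M < exp (f x)" using x(2) exp_gt_self[of "f x"] by simp
      then show "\<exists>i\<in>(\<lambda>x. ereal (exp (f x))) ` S. y < i" using x M
        by (intro bexI[of _ "ereal (exp (f x))"]) (auto intro: le_less_trans)
    qed
    then show ?thesis using PInf unfolding s_def U_def by (simp add: elog_def)
  next
    case MInf then show ?thesis using s_ge by simp
  next
    case (real r)
    have le: "f x \<le> r" if "x \<in> S" for x
    proof -
      have "ereal (f x) \<le> s" unfolding s_def using that by (auto intro: SUP_upper)
      then show ?thesis using real by simp
    qed
    have U_le: "U \<le> ereal (exp r)" unfolding U_def using le by (auto intro!: SUP_least)
    have U_ge: "ereal (exp (f x0)) \<le> U" unfolding U_def using x0 by (auto intro: SUP_upper)
    have "U = ereal (exp r)"
    proof (rule ccontr)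
      assume "U \<noteq> ereal (exp r)"
      then have lt: "U < ereal (exp r)" using U_le by simp
      then obtain u where u: "U = ereal u" using U_ge by (cases U) auto
      have u0: "u > 0" using U_ge u by simp (meson exp_gt_zero less_le_trans)
      have "u < exp r" using lt u by simp
      then have "ln u < r" using u0 ln_less_cancel_iff[of u "exp r"] by simp
      then have "ereal (ln u) < s" using real by simp
      then obtain x where x: "x \<in> S" "ereal (ln u) < ereal (f x)" unfolding s_def less_Sup_iff by auto
      then have "ln u < f x" by simp
      then have "u < exp (f x)" using u0 ln_less_cancel_iff[of u "exp (f x)"] by simp
      moreover have "ereal (exp (f x)) \<le> U" unfolding U_def using x by (auto intro: SUP_upper)
      ultimately show False using u by simp
    qed
    then show ?thesis using real unfolding s_def[symmetric] U_def[symmetric] by (simp add: elog_def)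
  qed
qed

section \<open>Resolvent characterization\<close>

context fr
begin

lemma res_iff:
  "Some l \<in> resolvent_set sc P UNIV B \<longleftrightarrow>
    (\<exists>R\<in>L0 sc P. (\<forall>x. sc l (R x) - B (R x) = x) \<and> (\<forall>x. R (sc l x - B x) = x))"
proof
  assume "Some l \<in> resolvent_set sc P UNIV B"
  then have b: "bij_betw (\<lambda>x. sc l x - B x) UNIV UNIV" and i: "inv_into UNIV (\<lambda>x. sc l x - B x) \<in> L0 sc P"
    unfolding resolvent_set_def by (auto split: if_splits)
  show "\<exists>R\<in>L0 sc P. (\<forall>x. sc l (R x) - B (R x) = x) \<and> (\<forall>x. R (sc l x - B x) = x)"
    using i bij_betw_inv_into_right[OF b] bij_betw_inv_into_left[OF b] by blast
next
  assume "\<exists>R\<in>L0 sc P. (\<forall>x. sc l (R x) - B (R x) = x) \<and> (\<forall>x. R (sc l x - B x) = x)"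
  then obtain R where R: "R \<in> L0 sc P" "\<And>x. sc l (R x) - B (R x) = x" "\<And>x. R (sc l x - B x) = x" by blast
  have b: "bij_betw (\<lambda>x. sc l x - B x) UNIV UNIV"
    by (rule bij_betw_byWitness[where f'=R]) (use R in auto)
  have "inv_into UNIV (\<lambda>x. sc l x - B x) = R"
  proof
    fix y show "inv_into UNIV (\<lambda>x. sc l x - B x) y = R y"
      by (rule inv_into_f_eq) (use b R in \<open>auto simp: bij_betw_def\<close>)
  qed
  then show "Some l \<in> resolvent_set sc P UNIV B" using b R(1) unfolding resolvent_set_def by auto
qed

lemma res_None: "B \<in> L0 sc P \<Longrightarrow> None \<in> resolvent_set sc P UNIV B"
  unfolding resolvent_set_def by auto

lemma L0_lin: "B \<in> L0 sc P \<Longrightarrow> lin B \<and> ebd {B}"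
  unfolding L0_def Lop_iff by auto

end

context calc
begin

lemma F_sub: "F (fps_const l - fps_X) y = sc l y - A y"
  using F_diff[OF K_const K_fpsX, of l y] F_const F_X[OF K_one] F_one by simp

lemma inv_commute:
  assumes "\<And>x. W (R x) = x" "\<And>x. R (W x) = x" "\<And>x. W (A x) = A (W x)"
  shows "R (A y) = A (R y)"
  by (metis assms)

lemma dir1:
  assumes "Some (exp l) \<in> resolvent_set sc P UNIV (F (fps_exp 1))"
  shows "Some l \<in> resolvent_set sc P UNIV A"
proof -
  define Q where "Q = fps_const (exp l) - fps_exp 1"
  have KQ: "K Q" unfolding Q_def by (intro K_diff K_const K_exp)
  have FQ: "F Q x = sc (exp l) x - F (fps_exp 1) x" for x
    unfolding Q_def using F_diff[OF K_const K_exp] F_const by simp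
  obtain R where R: "R \<in> L0 sc P" "\<And>x. F Q (R x) = x" "\<And>x. R (F Q x) = x"
    using assms[unfolded res_iff] FQ by auto
  have RA: "R (A y) = A (R y)" for y
    by (rule inv_commute[of "F Q" R]) (use R F_commA[OF KQ] in auto)
  have RF: "R (F h y) = F h (R y)" if "K h" for h y
    using F_commute[of R h y] L0_lin[OF R(1)] RA that by auto
  define J where "J = (\<lambda>x. F (G l) (R x))"
  have i: "sc l (J x) - A (J x) = x" for x
  proof -
    have "sc l (J x) - A (J x) = F (fps_const l - fps_X) (F (G l) (R x))" unfolding J_def F_sub ..
    also have "\<dots> = F ((fps_const l - fps_X) * G l) (R x)"
      by (rule F_mult[OF K_diff[OF K_const K_fpsX] K_G, symmetric])
    also have "\<dots> = F Q (R x)" unfolding G_ident Q_def ..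
    finally show ?thesis using R by simp
  qed
  have ii: "J (sc l x - A x) = x" for x
  proof -
    have "J (sc l x - A x) = F (G l) (F (fps_const l - fps_X) (R x))"
      unfolding J_def F_sub[symmetric] RF[OF K_diff[OF K_const K_fpsX]] ..
    also have "\<dots> = F (G l * (fps_const l - fps_X)) (R x)"
      by (rule F_mult[OF K_G K_diff[OF K_const K_fpsX], symmetric])
    also have "\<dots> = F Q (R x)" unfolding mult.commute[of "G l"] G_ident Q_def ..
    finally show ?thesis using R by simp
  qed
  have "J \<in> L0 sc P" unfolding J_def
    by (rule L0_comp[OF F_L0[OF K_G] R(1)]) (simp add: RF[OF K_G])
  then show ?thesis unfolding res_iff using i ii by blast
qed

lemma dir2:
  assumes "\<And>l. exp l = z \<Longrightarrow> Some l \<in> resolvent_set sc P UNIV A"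
  shows "Some z \<in> resolvent_set sc P UNIV (F (fps_exp 1))"
proof -
  define Q where "Q = fps_const z - fps_exp 1"
  have KQ: "K Q" unfolding Q_def by (intro K_diff K_const K_exp)
  have FQ: "F Q x = sc z x - F (fps_exp 1) x" for x
    unfolding Q_def using F_diff[OF K_const K_exp] F_const by simp
  have "\<exists>J\<in>L0 sc P. (\<forall>x. F Q (J x) = x) \<and> (\<forall>x. J (F Q x) = x)"
  proof (cases "\<exists>l. exp l = z \<and> norm l \<le> 1")
    case True
    then obtain l where l: "exp l = z" "norm l \<le> 1" by blast
    define W where "W = fps_const l - fps_X"
    have KW: "K W" unfolding W_def by (intro K_diff K_const K_fpsX)
    obtain R where R: "R \<in> L0 sc P" "\<And>x. F W (R x) = x" "\<And>x. R (F W x) = x"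
      using assms[OF l(1), unfolded res_iff] F_sub unfolding W_def by auto
    have RA: "R (A y) = A (R y)" for y
      by (rule inv_commute[of "F W" R]) (use R F_commA[OF KW] in auto)
    have RF: "R (F h y) = F h (R y)" if "K h" for h y
      using F_commute[of R h y] L0_lin[OF R(1)] RA that by auto
    have inv: "K (inverse (G l)) \<and> G l * inverse (G l) = 1 \<and> inverse (G l) * G l = 1"
      by (rule inverse_K[of 3]) (use G_nonzero[OF l(2)] G_radius in auto)
    define H where "H = inverse (G l)"
    have KH: "K H" using inv H_def by simp
    have QW: "Q = W * G l" unfolding Q_def W_def G_ident l(1) ..
    define J where "J = (\<lambda>x. F H (R x))"
    have i: "F Q (J x) = x" for x
    proof -
      have "F Q (J x) = F (W * G l) (F H (R x))" unfolding QW J_def ..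
      also have "\<dots> = F (W * G l * H) (R x)"
        using F_mult[OF K_mult_N1[OF KW K_G, THEN conjunct1] KH] by simp
      also have "W * G l * H = W" using inv unfolding H_def by (simp add: mult.assoc)
      finally show ?thesis using R by simp
    qed
    have ii: "J (F Q x) = x" for x
    proof -
      have "J (F Q x) = F H (R (F W (F (G l) x)))"
        unfolding J_def QW F_mult[OF KW K_G] ..
      also have "\<dots> = F H (F (G l) x)" using R by simp
      also have "\<dots> = F (H * G l) x" using F_mult[OF KH K_G] by simp
      also have "H * G l = 1" using inv unfolding H_def by simp
      finally show ?thesis by (simp add: F_one)
    qed
    have "J \<in> L0 sc P" unfolding J_def
      by (rule L0_comp[OF F_L0[OF KH] R(1)]) (simp add: RF[OF KH])
    then show ?thesis using i ii by blast
  next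
    case False
    have "\<exists>\<rho>>1. \<forall>w. norm w < \<rho> \<longrightarrow> exp w \<noteq> z"
    proof (cases "\<exists>\<mu>. exp \<mu> = z \<and> norm \<mu> < 3")
      case True
      then obtain \<mu> where mu: "exp \<mu> = z" "norm \<mu> < 3" by blast
      have "norm \<mu> > 1" using False mu by force
      moreover have "exp w \<noteq> z" if "norm w < norm \<mu>" for w
      proof
        assume "exp w = z"
        then have "w = \<mu>" using log_unique[of w \<mu>] mu norm_triangle_ineq4[of w \<mu>] that by force
        then show False using that by simp
      qed
      ultimately show ?thesis by blast
    next
      case False
      then show ?thesis by (intro exI[of _ 3]) auto
    qed
    then obtain \<rho> where rho: "\<rho> > 1" "\<And>w. norm w < \<rho> \<Longrightarrow> exp w \<noteq> z" by blast
    define W where "W = fps_exp 1 - fps_const z"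
    have rW: "fps_conv_radius W = \<infinity>"
      using fps_conv_radius_diff[of "fps_exp (1::complex)" "fps_const z"] unfolding W_def by simp
    have eW: "eval_fps W w = exp w - z" for w
      unfolding W_def by (simp add: eval_fps_diff)
    have inv: "K (inverse W) \<and> W * inverse W = 1 \<and> inverse W * W = 1"
      by (rule inverse_K[of \<rho>]) (use rho rW eW in auto)
    define H where "H = - inverse W"
    have KH: "K H" using inv H_def K_neg by simp
    have QH: "Q * H = 1" "H * Q = 1" using inv unfolding H_def Q_def W_def by (simp_all add: algebra_simps)
    have i: "F Q (F H x) = x" for x using F_mult[OF KQ KH] QH F_one by simp
    have ii: "F H (F Q x) = x" for x using F_mult[OF KH KQ] QH F_one by simp
    show ?thesis using F_L0[OF KH] i ii by blast
  qed
  then show ?thesis unfolding res_iff FQ by simp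
qed

theorem main_calc: "spectral_bound sc P UNIV A = elog (spectral_radius sc P (F (fps_exp 1)))"
proof -
  define \<Lambda> where "\<Lambda> = {l. Some l \<in> spectrum_ext sc P UNIV A}"
  define Z where "Z = {z. Some z \<in> spectrum_ext sc P UNIV (F (fps_exp 1))}"
  have sb: "spectral_bound sc P UNIV A = Sup ((\<lambda>l. ereal (Re l)) ` \<Lambda>)"
    unfolding spectral_bound_def \<Lambda>_def by (rule arg_cong[of _ _ Sup]) auto
  have None: "None \<notin> spectrum_ext sc P UNIV (F (fps_exp 1))"
    unfolding spectrum_ext_def using res_None[OF F_L0[OF K_exp]] by simp
  have spT: "spectrum_ext sc P UNIV (F (fps_exp 1)) = Some ` Z"
    unfolding Z_def using None by (auto simp: image_iff) (metis option.exhaust)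
  have ZL: "Z = exp ` \<Lambda>"
  proof
    show "Z \<subseteq> exp ` \<Lambda>"
    proof
      fix z assume "z \<in> Z"
      then have "Some z \<notin> resolvent_set sc P UNIV (F (fps_exp 1))" unfolding Z_def spectrum_ext_def by simp
      then obtain l where "exp l = z" "Some l \<notin> resolvent_set sc P UNIV A" using dir2 by blast
      then show "z \<in> exp ` \<Lambda>" unfolding \<Lambda>_def spectrum_ext_def by auto
    qed
    show "exp ` \<Lambda> \<subseteq> Z"
      using dir1 unfolding \<Lambda>_def Z_def spectrum_ext_def by auto
  qed
  have sr: "spectral_radius sc P (F (fps_exp 1)) = Sup ((\<lambda>l. ereal (exp (Re l))) ` \<Lambda>)"
    unfolding spectral_radius_def spT ZL image_image by simp
  show ?thesis unfolding sb sr by (rule elog_Sup[symmetric])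
qed

end


section \<open>Real estimates\<close>

lemma Dk_rec:
  fixes u h :: real
  shows "(u - h) ^ Suc k - u ^ Suc k + real (Suc k) * h * u ^ k
       = (u - h) * ((u - h) ^ k - u ^ k + real k * h * u ^ (k - 1)) + real k * h^2 * u ^ (k - 1)"
proof (cases k)
  case 0 then show ?thesis by (simp add: algebra_simps)
next
  case (Suc j)
  then have "u * u ^ (k - 1) = u ^ k" by simp
  then show ?thesis by (simp add: algebra_simps power2_eq_square)
qed

lemma Dk_bound:
  fixes u h :: real
  assumes h: "\<bar>h\<bar> \<le> 1"
  shows "\<bar>(u - h) ^ k - u ^ k + real k * h * u ^ (k - 1)\<bar> \<le> h^2 * real k ^ 2 * (\<bar>u\<bar> + 1) ^ k"
proof (induction k)
  case 0 then show ?case by simp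
next
  case (Suc k)
  define M where "M = \<bar>u\<bar> + 1"
  define D where "D = (u - h) ^ k - u ^ k + real k * h * u ^ (k - 1)"
  have M1: "M \<ge> 1" unfolding M_def by simp
  have IH: "\<bar>D\<bar> \<le> h^2 * real k ^ 2 * M ^ k" using Suc unfolding D_def M_def .
  have uh: "\<bar>u - h\<bar> \<le> M" unfolding M_def using h by linarith
  have up: "\<bar>u\<bar> ^ (k - 1) \<le> M ^ Suc k"
  proof -
    have "\<bar>u\<bar> ^ (k - 1) \<le> M ^ (k - 1)" unfolding M_def by (intro power_mono) auto
    also have "\<dots> \<le> M ^ Suc k" using M1 by (intro power_increasing) auto
    finally show ?thesis .
  qed
  have "\<bar>(u - h) * D + real k * h^2 * u ^ (k - 1)\<bar> \<le> \<bar>u - h\<bar> * \<bar>D\<bar> + real k * h^2 * \<bar>u\<bar> ^ (k - 1)"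
  proof -
    have a1: "\<bar>(u - h) * D + real k * h^2 * u ^ (k - 1)\<bar> \<le> \<bar>(u - h) * D\<bar> + \<bar>real k * h^2 * u ^ (k - 1)\<bar>"
      by (rule abs_triangle_ineq)
    have a2: "\<bar>(u - h) * D\<bar> = \<bar>u - h\<bar> * \<bar>D\<bar>" by (rule abs_mult)
    have a3: "\<bar>real k * h^2 * u ^ (k - 1)\<bar> = real k * h^2 * \<bar>u\<bar> ^ (k - 1)"
      by (simp add: abs_mult power_abs)
    from a1 a2 a3 show ?thesis by linarith
  qed
  also have "\<dots> \<le> M * (h^2 * real k ^ 2 * M ^ k) + real k * h^2 * M ^ Suc k"
    using uh IH up by (intro add_mono mult_mono mult_left_mono) auto
  also have "\<dots> = h^2 * M ^ Suc k * (real k ^ 2 + real k)" by (simp add: algebra_simps)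
  also have "\<dots> \<le> h^2 * M ^ Suc k * (real (Suc k) ^ 2)"
  proof (rule mult_left_mono)
    show "real k ^ 2 + real k \<le> real (Suc k) ^ 2" by (simp add: power2_eq_square algebra_simps)
    show "0 \<le> h^2 * M ^ Suc k" using M1 by simp
  qed
  finally have X: "\<bar>(u - h) * D + real k * h^2 * u ^ (k - 1)\<bar> \<le> h^2 * M ^ Suc k * (real (Suc k) ^ 2)" .
  have eq: "(u - h) ^ Suc k - u ^ Suc k + real (Suc k) * h * u ^ (Suc k - 1) = (u - h) * D + real k * h^2 * u ^ (k - 1)"
    using Dk_rec[of u h k] unfolding D_def by simp
  have eq2: "h^2 * M ^ Suc k * (real (Suc k) ^ 2) = h^2 * real (Suc k) ^ 2 * (\<bar>u\<bar> + 1) ^ Suc k"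
    unfolding M_def by simp
  show ?case using X unfolding eq eq2 .
qed

lemma sq_le_4pow: "real k ^ 2 \<le> 4 ^ k"
proof -
  have "k < 2 ^ k" by (rule less_exp)
  then have "real k \<le> 2 ^ k" by (metis less_imp_le of_nat_le_iff of_nat_numeral of_nat_power)
  then have "real k ^ 2 \<le> (2 ^ k) ^ 2" by (intro power_mono) auto
  also have "\<dots> = 4 ^ k" by (simp add: power2_eq_square power_mult_distrib[symmetric])
  finally show ?thesis .
qed

definition Kx :: "real \<Rightarrow> real" where "Kx M = (\<Sum>k. (4 * M) ^ k / fact k)"

lemma Kx_summable: "summable (\<lambda>k. (4 * M) ^ k / fact k :: real)"
  using summable_exp[of "4 * M"] by (simp add: field_simps)

lemma cb_der:
  fixes u h :: real
  assumes "\<bar>h\<bar> \<le> 1" "h \<noteq> 0"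
  shows "\<bar>((u - h) ^ k / fact k - u ^ k / fact k) / h + (if k = 0 then 0 else u ^ (k - 1) / fact (k - 1))\<bar>
         \<le> \<bar>h\<bar> * ((4 * (\<bar>u\<bar> + 1)) ^ k / fact k)"
proof -
  define M where "M = \<bar>u\<bar> + 1"
  have e: "(if k = 0 then 0 else u ^ (k - 1) / fact (k - 1)) = real k * u ^ (k - 1) / fact k"
  proof (cases k)
    case (Suc j)
    have "fact (Suc j) = real (Suc j) * (fact j :: real)" by simp
    then have "real (Suc j) * u ^ j / fact (Suc j) = u ^ j / fact j"
      by (simp del: of_nat_Suc fact_Suc)
    then show ?thesis using Suc by simp
  qed simp
  have "((u - h) ^ k / fact k - u ^ k / fact k) / h + (if k = 0 then 0 else u ^ (k - 1) / fact (k - 1))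
        = ((u - h) ^ k - u ^ k + real k * h * u ^ (k - 1)) / (h * fact k)"
    unfolding e using assms(2) by (simp add: field_simps)
  then have "\<bar>((u - h) ^ k / fact k - u ^ k / fact k) / h + (if k = 0 then 0 else u ^ (k - 1) / fact (k - 1))\<bar>
        = \<bar>(u - h) ^ k - u ^ k + real k * h * u ^ (k - 1)\<bar> / (\<bar>h\<bar> * fact k)"
    by (simp add: abs_mult)
  also have "\<dots> \<le> (h^2 * real k ^ 2 * M ^ k) / (\<bar>h\<bar> * fact k)"
    using Dk_bound[OF assms(1), of u k] assms(2) unfolding M_def by (intro divide_right_mono) auto
  also have "\<dots> = \<bar>h\<bar> * (real k ^ 2 * M ^ k / fact k)"
    using assms(2) by (simp add: power2_eq_square field_simps)
  also have "\<dots> \<le> \<bar>h\<bar> * (4 ^ k * M ^ k / fact k)"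
    using sq_le_4pow[of k] unfolding M_def
    by (intro mult_left_mono divide_right_mono mult_right_mono) auto
  finally show ?thesis unfolding power_mult_distrib M_def[symmetric] .
qed

lemma cb_cont:
  fixes u d :: real
  assumes "\<bar>d\<bar> \<le> 1"
  shows "\<bar>(u + d) ^ k / fact k - u ^ k / fact k\<bar> \<le> 2 * \<bar>d\<bar> * ((4 * (\<bar>u\<bar> + 1)) ^ k / fact k)"
proof -
  define M where "M = \<bar>u\<bar> + 1"
  have M1: "M \<ge> 1" unfolding M_def by simp
  have D: "\<bar>(u - (-d)) ^ k - u ^ k + real k * (-d) * u ^ (k - 1)\<bar> \<le> (-d)^2 * real k ^ 2 * M ^ k"
    using Dk_bound[of "-d" u k] assms unfolding M_def by simp
  have "\<bar>(u + d) ^ k - u ^ k\<bar> \<le> \<bar>(u - (-d)) ^ k - u ^ k + real k * (-d) * u ^ (k - 1)\<bar> + \<bar>real k * d * u ^ (k - 1)\<bar>"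
    by simp
  also have "\<dots> \<le> d^2 * real k ^ 2 * M ^ k + \<bar>d\<bar> * real k * \<bar>u\<bar> ^ (k - 1)"
    using D by (simp add: abs_mult power_abs)
  also have "\<dots> \<le> \<bar>d\<bar> * real k ^ 2 * M ^ k + \<bar>d\<bar> * real k ^ 2 * M ^ k"
  proof (intro add_mono)
    have "d^2 = \<bar>d\<bar> * \<bar>d\<bar>" by (simp add: power2_eq_square)
    also have "\<dots> \<le> \<bar>d\<bar> * 1" using assms by (intro mult_left_mono) auto
    finally have "d^2 \<le> \<bar>d\<bar>" by simp
    then show "d^2 * real k ^ 2 * M ^ k \<le> \<bar>d\<bar> * real k ^ 2 * M ^ k"
      using M1 by (intro mult_right_mono) auto
    have "real k \<le> real k ^ 2" by (cases k) (auto simp: power2_eq_square)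
    moreover have "\<bar>u\<bar> ^ (k - 1) \<le> M ^ k"
    proof -
      have "\<bar>u\<bar> ^ (k - 1) \<le> M ^ (k - 1)" unfolding M_def by (intro power_mono) auto
      also have "\<dots> \<le> M ^ k" using M1 by (intro power_increasing) auto
      finally show ?thesis .
    qed
    ultimately show "\<bar>d\<bar> * real k * \<bar>u\<bar> ^ (k - 1) \<le> \<bar>d\<bar> * real k ^ 2 * M ^ k"
      by (simp add: mult.assoc mult_left_mono mult_mono)
  qed
  also have "\<dots> = 2 * \<bar>d\<bar> * (real k ^ 2 * M ^ k)" by simp
  also have "\<dots> \<le> 2 * \<bar>d\<bar> * (4 ^ k * M ^ k)"
    using sq_le_4pow[of k] M1 by (intro mult_left_mono mult_right_mono) auto
  finally have "\<bar>(u + d) ^ k - u ^ k\<bar> \<le> 2 * \<bar>d\<bar> * ((4 * M) ^ k)" by (simp add: power_mult_distrib)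
  then have "\<bar>(u + d) ^ k - u ^ k\<bar> / fact k \<le> 2 * \<bar>d\<bar> * ((4 * M) ^ k) / fact k"
    by (intro divide_right_mono) auto
  moreover have "\<bar>(u + d) ^ k / fact k - u ^ k / fact k\<bar> = \<bar>(u + d) ^ k - u ^ k\<bar> / fact k"
    by (simp only: diff_divide_distrib[symmetric] abs_divide abs_of_pos[OF fact_gt_zero])
  moreover have "2 * \<bar>d\<bar> * ((4 * M) ^ k) / fact k = 2 * \<bar>d\<bar> * ((4 * M) ^ k / fact k)" by simp
  ultimately show ?thesis unfolding M_def by simp
qed


lemma fps_exp_real_nth: "fps_nth (fps_exp (complex_of_real u)) k = complex_of_real (u ^ k / fact k)"
  by simp

lemma dini:
  fixes \<phi> :: "real \<Rightarrow> real"
  assumes cont: "continuous_on {0..1} \<phi>" and z: "\<phi> 0 \<le> 0"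
    and d: "\<And>r \<epsilon>. 0 \<le> r \<Longrightarrow> r < 1 \<Longrightarrow> \<epsilon> > 0 \<Longrightarrow> \<forall>\<^sub>F h in at_right 0. \<phi> (r + h) \<le> \<phi> r + \<epsilon> * h"
  shows "\<phi> 1 \<le> 0"
proof (rule field_le_epsilon)
  fix \<epsilon> :: real assume e: "\<epsilon> > 0"
  define S where "S = {r \<in> {0..1}. \<phi> r \<le> \<epsilon> * r}"
  have cl: "closed S" unfolding S_def
    by (rule continuous_on_closed_Collect_le[OF cont]) (auto intro!: continuous_intros)
  have S0: "0 \<in> S" unfolding S_def using z by simp
  have bdd: "bdd_above S" unfolding S_def by (auto intro: bdd_aboveI[of _ 1])
  define \<sigma> where "\<sigma> = Sup S"
  have sS: "\<sigma> \<in> S" unfolding \<sigma>_def using closed_contains_Sup[OF _ bdd cl] S0 by blast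
  have s1: "\<sigma> = 1"
  proof (rule ccontr)
    assume "\<sigma> \<noteq> 1"
    then have lt: "\<sigma> < 1" and s0: "0 \<le> \<sigma>" using sS unfolding S_def by auto
    have ev3: "\<forall>\<^sub>F h in at_right 0. h < 1 - \<sigma>"
      unfolding eventually_at_right_field using lt by (intro exI[of _ "1 - \<sigma>"]) auto
    have ev: "\<forall>\<^sub>F h in at_right 0. \<phi> (\<sigma> + h) \<le> \<phi> \<sigma> + \<epsilon> * h \<and> 0 < h \<and> h < 1 - \<sigma>"
      using eventually_conj[OF d[OF s0 lt e] eventually_conj[OF eventually_at_right_less[of "0::real"] ev3]] .
    obtain h where h: "\<phi> (\<sigma> + h) \<le> \<phi> \<sigma> + \<epsilon> * h" "0 < h" "h < 1 - \<sigma>"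
      using eventually_happens'[OF trivial_limit_at_right_real ev] by blast
    have "\<phi> \<sigma> \<le> \<epsilon> * \<sigma>" using sS unfolding S_def by simp
    then have "\<sigma> + h \<in> S" unfolding S_def using h s0 by (auto simp: algebra_simps)
    then have "\<sigma> + h \<le> \<sigma>" unfolding \<sigma>_def by (rule cSup_upper[OF _ bdd])
    then show False using h by simp
  qed
  show "\<phi> 1 \<le> 0 + \<epsilon>" using sS unfolding s1 S_def by simp
qed

context calc
begin

definition E :: "real \<Rightarrow> 'a \<Rightarrow> 'a" where "E u = F (fps_exp (complex_of_real u))"

lemma E0: "E 0 x = x" unfolding E_def using F_one by simp
lemma E1: "E 1 = F (fps_exp 1)" unfolding E_def by simp

lemma E_cont_bnd: "\<exists>m C. C \<ge> 0 \<and> (\<forall>u d x. \<bar>d\<bar> \<le> 1 \<longrightarrow> P n (E (u + d) x - E u x) \<le> 2 * \<bar>d\<bar> * Kx (\<bar>u\<bar> + 1) * C * P m x)"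
proof -
  obtain m C where mC: "C \<ge> 0" "\<forall>f x. K f \<longrightarrow> P n (F f x) \<le> N1 f * C * P m x" using F_bound by blast
  have "P n (E (u + d) x - E u x) \<le> 2 * \<bar>d\<bar> * Kx (\<bar>u\<bar> + 1) * C * P m x" if d: "\<bar>d\<bar> \<le> 1" for u d x
  proof -
    define f where "f = fps_exp (complex_of_real (u + d)) - fps_exp (complex_of_real u)"
    have Kf: "K f" unfolding f_def by (intro K_diff K_exp)
    have "E (u + d) x - E u x = F f x" unfolding E_def f_def by (rule F_diff[OF K_exp K_exp, symmetric])
    moreover have "N1 f \<le> 2 * \<bar>d\<bar> * Kx (\<bar>u\<bar> + 1)"
    proof -
      have "N1 f \<le> (\<Sum>k. 2 * \<bar>d\<bar> * ((4 * (\<bar>u\<bar> + 1)) ^ k / fact k))" unfolding N1_def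
      proof (rule suminf_le)
        show "cmod (fps_nth f k) \<le> 2 * \<bar>d\<bar> * ((4 * (\<bar>u\<bar> + 1)) ^ k / fact k)" for k
        proof -
          have "fps_nth f k = complex_of_real ((u + d) ^ k / fact k - u ^ k / fact k)"
            unfolding f_def fps_sub_nth fps_exp_real_nth by simp
          then have "cmod (fps_nth f k) = \<bar>(u + d) ^ k / fact k - u ^ k / fact k\<bar>" by (simp only: norm_of_real)
          then show ?thesis using cb_cont[OF d, of u k] by simp
        qed
        show "summable (\<lambda>k. cmod (fps_nth f k))" using Kf unfolding K_def .
        show "summable (\<lambda>k. 2 * \<bar>d\<bar> * ((4 * (\<bar>u\<bar> + 1)) ^ k / fact k))"
          by (intro summable_mult Kx_summable)
      qed
      also have "\<dots> = 2 * \<bar>d\<bar> * Kx (\<bar>u\<bar> + 1)" unfolding Kx_def by (rule suminf_mult[OF Kx_summable])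
      finally show ?thesis .
    qed
    ultimately show ?thesis using mC Kf
      by (smt (verit) P_nonneg mult_right_mono mult_nonneg_nonneg)
  qed
  then show ?thesis using mC by blast
qed

lemma E_der_bnd: "\<exists>m C. C \<ge> 0 \<and> (\<forall>u h x. \<bar>h\<bar> \<le> 1 \<longrightarrow> h \<noteq> 0 \<longrightarrow>
    P n (sc (complex_of_real (1 / h)) (E (u - h) x - E u x) + A (E u x)) \<le> \<bar>h\<bar> * Kx (\<bar>u\<bar> + 1) * C * P m x)"
proof -
  obtain m C where mC: "C \<ge> 0" "\<forall>f x. K f \<longrightarrow> P n (F f x) \<le> N1 f * C * P m x" using F_bound by blast
  have "P n (sc (complex_of_real (1 / h)) (E (u - h) x - E u x) + A (E u x)) \<le> \<bar>h\<bar> * Kx (\<bar>u\<bar> + 1) * C * P m x"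
    if h: "\<bar>h\<bar> \<le> 1" "h \<noteq> 0" for u h x
  proof -
    define f where "f = fps_const (complex_of_real (1 / h)) * (fps_exp (complex_of_real (u - h)) - fps_exp (complex_of_real u))
        + fps_X * fps_exp (complex_of_real u)"
    have Kf: "K f" unfolding f_def by (intro K_add K_cmult K_diff K_exp K_X)
    have "sc (complex_of_real (1 / h)) (E (u - h) x - E u x) + A (E u x) = F f x"
      unfolding E_def f_def
      by (simp add: F_add F_cmult F_diff F_X K_cmult K_diff K_exp K_X)
    moreover have "N1 f \<le> \<bar>h\<bar> * Kx (\<bar>u\<bar> + 1)"
    proof -
      have "N1 f \<le> (\<Sum>k. \<bar>h\<bar> * ((4 * (\<bar>u\<bar> + 1)) ^ k / fact k))" unfolding N1_def
      proof (rule suminf_le)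
        show "cmod (fps_nth f k) \<le> \<bar>h\<bar> * ((4 * (\<bar>u\<bar> + 1)) ^ k / fact k)" for k
        proof -
          have "fps_nth f k = complex_of_real (((u - h) ^ k / fact k - u ^ k / fact k) / h +
                (if k = 0 then 0 else u ^ (k - 1) / fact (k - 1)))"
            unfolding f_def by (simp add: fps_exp_real_nth divide_inverse algebra_simps)
          then have "cmod (fps_nth f k) = \<bar>((u - h) ^ k / fact k - u ^ k / fact k) / h +
                (if k = 0 then 0 else u ^ (k - 1) / fact (k - 1))\<bar>" by (simp only: norm_of_real)
          then show ?thesis using cb_der[OF h, of u k] by simp
        qed
        show "summable (\<lambda>k. cmod (fps_nth f k))" using Kf unfolding K_def .
        show "summable (\<lambda>k. \<bar>h\<bar> * ((4 * (\<bar>u\<bar> + 1)) ^ k / fact k))"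
          by (intro summable_mult Kx_summable)
      qed
      also have "\<dots> = \<bar>h\<bar> * Kx (\<bar>u\<bar> + 1)" unfolding Kx_def by (rule suminf_mult[OF Kx_summable])
      finally show ?thesis .
    qed
    ultimately show ?thesis using mC Kf
      by (smt (verit) P_nonneg mult_right_mono mult_nonneg_nonneg)
  qed
  then show ?thesis using mC by blast
qed

end


locale sg = fr +
  fixes T :: "real \<Rightarrow> 'a \<Rightarrow> 'a"
  assumes c0: "c0_semigroup sc P T" and ee: "exp_equicont sc P T"
    and gd: "gen_dom sc P T = UNIV" and ge: "equicont sc P (range (\<lambda>n. gen sc P T ^^ n))"
begin

lemma T_lin: "t \<ge> 0 \<Longrightarrow> lin (T t)" using c0 unfolding c0_semigroup_def Lop_iff by auto
lemma T_ebd: "t \<ge> 0 \<Longrightarrow> ebd {T t}" using c0 unfolding c0_semigroup_def Lop_iff by auto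
lemma T0: "T 0 x = x" using c0 unfolding c0_semigroup_def by auto
lemma Tadd: "t \<ge> 0 \<Longrightarrow> s \<ge> 0 \<Longrightarrow> T (t + s) x = T t (T s x)"
  using c0 unfolding c0_semigroup_def by auto
lemma Tcont: "t \<ge> 0 \<Longrightarrow> tends (\<lambda>s. T s x) (T t x) (at t within {0..})"
  using c0 unfolding c0_semigroup_def by auto

lemma gen_tends: "tends (\<lambda>h. sc (complex_of_real (1 / h)) (T h x - x)) (gen sc P T x) (at_right 0)"
proof -
  have "x \<in> gen_dom sc P T" using gd by simp
  then obtain y where y: "tends (\<lambda>h. sc (complex_of_real (1 / h)) (T h x - x)) y (at_right 0)"
    unfolding gen_dom_def by blast
  show ?thesis unfolding gen_def
    by (rule theI[of _ y]) (use y tends_unique[OF trivial_limit_at_right_real] in blast)+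
qed

lemma linA: "lin (gen sc P T)"
  unfolding lin_iff
proof (intro conjI allI)
  fix x y
  have "\<forall>\<^sub>F h in at_right 0. sc (complex_of_real (1 / h)) (T h x - x) + sc (complex_of_real (1 / h)) (T h y - y)
      = sc (complex_of_real (1 / h)) (T h (x + y) - (x + y))"
    using eventually_at_right_less[of "0::real"]
    by eventually_elim (simp add: lin_add[OF T_lin] sc_diff V.scale_right_distrib algebra_simps)
  from tends_eventually[OF this tends_add[OF gen_tends gen_tends]]
  show "gen sc P T (x + y) = gen sc P T x + gen sc P T y"
    using tends_unique[OF trivial_limit_at_right_real gen_tends] by blast
next
  fix c x
  have "\<forall>\<^sub>F h in at_right 0. sc c (sc (complex_of_real (1 / h)) (T h x - x))
      = sc (complex_of_real (1 / h)) (T h (sc c x) - sc c x)"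
    using eventually_at_right_less[of "0::real"]
    by eventually_elim (simp add: lin_sc[OF T_lin] sc_diff mult.commute)
  from tends_eventually[OF this tends_sc[OF gen_tends]]
  show "gen sc P T (sc c x) = sc c (gen sc P T x)"
    using tends_unique[OF trivial_limit_at_right_real gen_tends] by blast
qed

lemma powb: "ebd (range (\<lambda>k. gen sc P T ^^ k))" using ge equicont_iff by simp

sublocale calc sc P "gen sc P T" by unfold_locales (use linA[unfolded lin_iff] powb in auto)

abbreviation "A \<equiv> gen sc P T"

lemma LB: "\<exists>m C. C \<ge> 0 \<and> (\<forall>t x. 0 \<le> t \<longrightarrow> t \<le> 1 \<longrightarrow> P n (T t x) \<le> C * P m x)"
proof -
  obtain \<omega> where om: "equicont sc P {(\<lambda>x. sc (complex_of_real (exp (- \<omega> * t))) (T t x)) | t. t \<ge> 0}"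
    using ee unfolding exp_equicont_def by blast
  obtain m C where mC: "C \<ge> 0" "\<forall>B\<in>{(\<lambda>x. sc (complex_of_real (exp (- \<omega> * t))) (T t x)) | t. t \<ge> 0}. \<forall>x. P n (B x) \<le> C * P m x"
    using om unfolding equicont_iff ebd_def by blast
  have "P n (T t x) \<le> (exp \<bar>\<omega>\<bar> * C) * P m x" if t: "0 \<le> t" "t \<le> 1" for t x
  proof -
    have mem: "(\<lambda>x. sc (complex_of_real (exp (- \<omega> * t))) (T t x)) \<in> {(\<lambda>x. sc (complex_of_real (exp (- \<omega> * t))) (T t x)) | t. t \<ge> 0}"
      using t by blast
    have "P n (sc (complex_of_real (exp (- \<omega> * t))) (T t x)) \<le> C * P m x" using mC(2)[rule_format, OF mem] by simp
    then have a: "exp (- \<omega> * t) * P n (T t x) \<le> C * P m x" by (simp add: P_sc)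
    have "P n (T t x) = exp (\<omega> * t) * (exp (- \<omega> * t) * P n (T t x))"
      by (simp add: exp_minus field_simps)
    also have "\<dots> \<le> exp (\<omega> * t) * (C * P m x)" using a by (intro mult_left_mono) auto
    also have "\<dots> \<le> exp \<bar>\<omega>\<bar> * (C * P m x)"
    proof (intro mult_right_mono)
      have "\<omega> * t \<le> \<bar>\<omega>\<bar>" using t
        by (metis abs_ge_self abs_mult abs_of_nonneg mult_left_le order_trans abs_ge_zero)
      then show "exp (\<omega> * t) \<le> exp \<bar>\<omega>\<bar>" by simp
    qed (use mC in auto)
    finally show ?thesis by simp
  qed
  then show ?thesis using mC by (intro exI[of _ m] exI[of _ "exp \<bar>\<omega>\<bar> * C"]) auto
qed

end


context sg
begin

lemma ev_within01: "\<forall>\<^sub>F s in at r within {0..1::real}. 0 \<le> s \<and> s \<le> 1"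
  unfolding eventually_at_filter by (intro always_eventually) auto

lemma w_cont:
  assumes r: "0 \<le> r" "r \<le> 1"
  shows "tends (\<lambda>s. T s (E (1 - s) x)) (T r (E (1 - r) x)) (at r within {0..1})"
proof (rule tendsI)
  fix n
  define y where "y = E (1 - r) x"
  obtain m1 C1 where m1: "C1 \<ge> 0" "\<forall>t x. 0 \<le> t \<longrightarrow> t \<le> 1 \<longrightarrow> P n (T t x) \<le> C1 * P m1 x" using LB by blast
  obtain m2 C2 where m2: "C2 \<ge> 0" "\<forall>u d x. \<bar>d\<bar> \<le> 1 \<longrightarrow> P m1 (E (u + d) x - E u x) \<le> 2 * \<bar>d\<bar> * Kx (\<bar>u\<bar> + 1) * C2 * P m2 x"
    using E_cont_bnd by blast
  define b where "b s = C1 * (2 * \<bar>r - s\<bar> * Kx (\<bar>1 - r\<bar> + 1) * C2 * P m2 x) + P n (T s y - T r y)" for s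
  show "\<exists>b. (b \<longlongrightarrow> 0) (at r within {0..1}) \<and> (\<forall>\<^sub>F s in at r within {0..1}. P n (T s (E (1 - s) x) - T r (E (1 - r) x)) \<le> b s)"
  proof (intro exI conjI)
    have "((\<lambda>s. r - s) \<longlongrightarrow> 0) (at r within {0..1})"
      using tendsto_diff[OF tendsto_const[of r] tendsto_ident_at[of r "{0..1}"]] by simp
    then have l1: "((\<lambda>s. \<bar>r - s\<bar>) \<longlongrightarrow> 0) (at r within {0..1})"
      by (rule tendsto_rabs_zero)
    have l1': "((\<lambda>s. C1 * (2 * \<bar>r - s\<bar> * Kx (\<bar>1 - r\<bar> + 1) * C2 * P m2 x)) \<longlongrightarrow> 0) (at r within {0..1})"
    proof -
      have "((\<lambda>s. \<bar>r - s\<bar> * (C1 * 2 * Kx (\<bar>1 - r\<bar> + 1) * C2 * P m2 x)) \<longlongrightarrow> 0) (at r within {0..1})"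
        by (rule tendsto_mult_left_zero[OF l1])
      then show ?thesis by (simp add: ac_simps)
    qed
    have l2: "((\<lambda>s. P n (T s y - T r y)) \<longlongrightarrow> 0) (at r within {0..1})"
      using tendsD[OF Tcont[OF r(1), of y], of n] by (rule tendsto_within_subset) auto
    show "(b \<longlongrightarrow> 0) (at r within {0..1})" unfolding b_def using tendsto_add[OF l1' l2] by simp
    show "\<forall>\<^sub>F s in at r within {0..1}. P n (T s (E (1 - s) x) - T r (E (1 - r) x)) \<le> b s"
      using ev_within01[of r]
    proof eventually_elim
      case (elim s)
      then have s: "0 \<le> s" "s \<le> 1" by auto
      have "T s (E (1 - s) x) - T r y = T s (E (1 - s) x - y) + (T s y - T r y)"
        by (simp add: lin_diff[OF T_lin[OF s(1)]])
      then have "P n (T s (E (1 - s) x) - T r y) \<le> P n (T s (E (1 - s) x - y)) + P n (T s y - T r y)"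
        using P_tri by metis
      also have "P n (T s (E (1 - s) x - y)) \<le> C1 * P m1 (E (1 - s) x - y)" using m1 s by blast
      also have "P m1 (E (1 - s) x - y) \<le> 2 * \<bar>r - s\<bar> * Kx (\<bar>1 - r\<bar> + 1) * C2 * P m2 x"
        using m2(2)[rule_format, of "r - s" "1 - r" x] s r unfolding y_def by simp
      finally show ?case using m1(1) unfolding b_def y_def
        by (smt (verit) mult_left_mono)
    qed
  qed
qed

lemma w_der:
  assumes r: "0 \<le> r" "r < 1"
  shows "tends (\<lambda>h. sc (complex_of_real (1 / h)) (T (r + h) (E (1 - (r + h)) x) - T r (E (1 - r) x))) 0 (at_right 0)"
proof (rule tendsI)
  fix n
  define u where "u = 1 - r"
  define y where "y = E u x"
  have u0: "u > 0" unfolding u_def using r by simp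
  obtain m1 C1 where m1: "C1 \<ge> 0" "\<forall>t x. 0 \<le> t \<longrightarrow> t \<le> 1 \<longrightarrow> P n (T t x) \<le> C1 * P m1 x" using LB by blast
  obtain m2 C2 where m2: "C2 \<ge> 0" "\<forall>t x. 0 \<le> t \<longrightarrow> t \<le> 1 \<longrightarrow> P m1 (T t x) \<le> C2 * P m2 x" using LB by blast
  obtain m3 C3 where m3: "C3 \<ge> 0" "\<forall>u h x. \<bar>h\<bar> \<le> 1 \<longrightarrow> h \<noteq> 0 \<longrightarrow>
    P m2 (sc (complex_of_real (1 / h)) (E (u - h) x - E u x) + A (E u x)) \<le> \<bar>h\<bar> * Kx (\<bar>u\<bar> + 1) * C3 * P m3 x"
    using E_der_bnd by blast
  define b where "b h = C1 * (P m1 (sc (complex_of_real (1 / h)) (T h y - y) - A y)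
      + C2 * (\<bar>h\<bar> * Kx (\<bar>u\<bar> + 1) * C3 * P m3 x) + P m1 (T h (A y) - A y))" for h
  show "\<exists>b. (b \<longlongrightarrow> 0) (at_right 0) \<and> (\<forall>\<^sub>F h in at_right 0. P n (sc (complex_of_real (1 / h)) (T (r + h) (E (1 - (r + h)) x) - T r (E (1 - r) x)) - 0) \<le> b h)"
  proof (intro exI conjI)
    have t1: "((\<lambda>h. P m1 (sc (complex_of_real (1 / h)) (T h y - y) - A y)) \<longlongrightarrow> 0) (at_right 0)"
      by (rule tendsD[OF gen_tends])
    have t2: "((\<lambda>h. C2 * (\<bar>h\<bar> * Kx (\<bar>u\<bar> + 1) * C3 * P m3 x)) \<longlongrightarrow> 0) (at_right (0::real))"
    proof -
      have "((\<lambda>h::real. \<bar>h\<bar>) \<longlongrightarrow> 0) (at_right 0)"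
        using tendsto_rabs_zero[OF tendsto_ident_at[of "0::real" "{0<..}"]] by simp
      from tendsto_mult_left_zero[OF this, of "C2 * Kx (\<bar>u\<bar> + 1) * C3 * P m3 x"]
      show ?thesis by (simp add: ac_simps)
    qed
    have t3: "((\<lambda>h. P m1 (T h (A y) - A y)) \<longlongrightarrow> 0) (at_right 0)"
      using tendsD[OF Tcont[of 0 "A y"], of m1] unfolding T0 by (rule tendsto_within_subset) auto
    show "(b \<longlongrightarrow> 0) (at_right 0)" unfolding b_def
      using tendsto_mult_right_zero[OF tendsto_add_zero[OF tendsto_add_zero[OF t1 t2] t3], of C1] .
    have ev: "\<forall>\<^sub>F h in at_right 0. h < min 1 u"
      unfolding eventually_at_right_field using u0 by (intro exI[of _ "min 1 u"]) auto
    show "\<forall>\<^sub>F h in at_right 0. P n (sc (complex_of_real (1 / h)) (T (r + h) (E (1 - (r + h)) x) - T r (E (1 - r) x)) - 0) \<le> b h"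
      using ev eventually_at_right_less[of "0::real"]
    proof eventually_elim
      case (elim h)
      then have h: "0 < h" "h \<le> 1" "h < u" by auto
      define c where "c = complex_of_real (1 / h)"
      define z where "z = sc c (E (u - h) x - y)"
      define v where "v = sc c (T h y - y)"
      have eqw: "sc c (T (r + h) (E (1 - (r + h)) x) - T r (E (1 - r) x))
          = T r ((v - A y) + T h (z + A y) - (T h (A y) - A y))"
      proof -
        have a: "T (r + h) (E (1 - (r + h)) x) = T r (T h (E (u - h) x))"
          using Tadd[of r h] r h unfolding u_def by (simp add: algebra_simps)
        have b: "T h z = sc c (T h (E (u - h) x) - T h y)"
          unfolding z_def by (simp add: lin_sc[OF T_lin] lin_diff[OF T_lin] h(1) less_imp_le)
        have "(v - A y) + T h (z + A y) - (T h (A y) - A y) = v + T h z"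
          by (simp add: lin_add[OF T_lin] h(1) less_imp_le)
        also have "\<dots> = sc c (T h (E (u - h) x) - y)"
          unfolding b v_def by (simp add: sc_diff)
        finally have "T r ((v - A y) + T h (z + A y) - (T h (A y) - A y)) = T r (sc c (T h (E (u - h) x) - y))"
          by simp
        also have "\<dots> = sc c (T r (T h (E (u - h) x)) - T r y)"
          by (simp add: lin_sc[OF T_lin] lin_diff[OF T_lin] r(1))
        finally show ?thesis unfolding a y_def u_def by simp
      qed
      define Q where "Q = (v - A y) + T h (z + A y) - (T h (A y) - A y)"
      have q1: "P n (T r Q) \<le> C1 * P m1 Q" using m1 r by simp
      have q2: "P m1 Q \<le> P m1 (v - A y) + P m1 (T h (z + A y)) + P m1 (T h (A y) - A y)"
        unfolding Q_def
        using P_tri[of m1 "v - A y" "T h (z + A y)"] P_diff[of m1 "v - A y + T h (z + A y)" "T h (A y) - A y"] by linarith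
      have q3: "P m1 (T h (z + A y)) \<le> C2 * P m2 (z + A y)" using m2 h by simp
      have q4: "P m2 (z + A y) \<le> \<bar>h\<bar> * Kx (\<bar>u\<bar> + 1) * C3 * P m3 x"
        using m3(2)[rule_format, of h u x] h unfolding z_def c_def y_def by simp
      have q5: "C2 * P m2 (z + A y) \<le> C2 * (\<bar>h\<bar> * Kx (\<bar>u\<bar> + 1) * C3 * P m3 x)"
        using q4 m2(1) by (rule mult_left_mono)
      have q6: "P m1 Q \<le> P m1 (v - A y) + C2 * (\<bar>h\<bar> * Kx (\<bar>u\<bar> + 1) * C3 * P m3 x) + P m1 (T h (A y) - A y)"
        using q2 q3 q5 by linarith
      have q7: "C1 * P m1 Q \<le> C1 * (P m1 (v - A y) + C2 * (\<bar>h\<bar> * Kx (\<bar>u\<bar> + 1) * C3 * P m3 x) + P m1 (T h (A y) - A y))"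
        using q6 m1(1) by (rule mult_left_mono)
      have bh: "b h = C1 * (P m1 (v - A y) + C2 * (\<bar>h\<bar> * Kx (\<bar>u\<bar> + 1) * C3 * P m3 x) + P m1 (T h (A y) - A y))"
        unfolding b_def v_def c_def ..
      have lhs: "P n (sc (complex_of_real (1 / h)) (T (r + h) (E (1 - (r + h)) x) - T r (E (1 - r) x)) - 0) = P n (T r Q)"
        unfolding diff_zero Q_def eqw[unfolded c_def] ..
      show ?case unfolding lhs bh using q1 q7 by linarith
    qed
  qed
qed

end


context sg
begin

lemma T1: "T 1 x = F (fps_exp 1) x"
proof -
  define w where "w s = T s (E (1 - s) x)" for s
  have w0: "w 0 = F (fps_exp 1) x" unfolding w_def T0 by (simp add: E1)
  have w1: "w 1 = T 1 x" unfolding w_def by (simp add: E0)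
  have "P n (w 1 - w 0) \<le> 0" for n
  proof -
    define \<phi> where "\<phi> s = P n (w s - w 0)" for s
    have cont: "continuous_on {0..1} \<phi>"
      unfolding continuous_on_def
    proof
      fix r :: real assume "r \<in> {0..1}"
      then have r: "0 \<le> r" "r \<le> 1" by auto
      have "((\<lambda>s. \<phi> s - \<phi> r) \<longlongrightarrow> 0) (at r within {0..1})"
      proof (rule Lim_null_comparison)
        show "\<forall>\<^sub>F s in at r within {0..1}. norm (\<phi> s - \<phi> r) \<le> P n (w s - w r)"
          using P_rev[of n "w s - w 0" "w r - w 0" for s] unfolding \<phi>_def by (intro always_eventually) simp
        show "((\<lambda>s. P n (w s - w r)) \<longlongrightarrow> 0) (at r within {0..1})"
          using tendsD[OF w_cont[OF r, of x]] unfolding w_def .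
      qed
      then show "(\<phi> \<longlongrightarrow> \<phi> r) (at r within {0..1})" by (rule LIM_zero_cancel)
    qed
    have "\<phi> 1 \<le> 0"
    proof (rule dini[OF cont])
      show "\<phi> 0 \<le> 0" unfolding \<phi>_def by simp
      fix r \<epsilon> :: real assume r: "0 \<le> r" "r < 1" and e: "\<epsilon> > 0"
      have lim: "((\<lambda>h. P n (sc (complex_of_real (1 / h)) (w (r + h) - w r))) \<longlongrightarrow> 0) (at_right 0)"
        using tendsD[OF w_der[OF r, of x], of n] unfolding w_def by simp
      have ev: "\<forall>\<^sub>F h in at_right 0. P n (sc (complex_of_real (1 / h)) (w (r + h) - w r)) < \<epsilon>"
        using order_tendstoD(2)[OF lim e] .
      show "\<forall>\<^sub>F h in at_right 0. \<phi> (r + h) \<le> \<phi> r + \<epsilon> * h"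
        using ev eventually_at_right_less[of "0::real"]
      proof eventually_elim
        case (elim h)
        then have h: "h > 0" "P n (sc (complex_of_real (1 / h)) (w (r + h) - w r)) < \<epsilon>" by auto
        have cm: "cmod (complex_of_real (1 / h)) = 1 / h" using h(1) by (simp only: norm_of_real) simp
        have "(1 / h) * P n (w (r + h) - w r) < \<epsilon>" using h(2) unfolding P_sc cm .
        then have "P n (w (r + h) - w r) < \<epsilon> * h" using h(1) by (simp add: field_simps)
        moreover have "\<phi> (r + h) \<le> P n (w (r + h) - w r) + \<phi> r"
          unfolding \<phi>_def by (rule P_tri_diff)
        ultimately show ?case by linarith
      qed
    qed
    then show ?thesis unfolding \<phi>_def .
  qed
  then have "w 1 - w 0 = 0" by (rule sep_le)
  then show ?thesis using w0 w1 by simp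
qed

theorem sg_main: "spectral_bound sc P (gen_dom sc P T) (gen sc P T) = elog (spectral_radius sc P (T 1))"
proof -
  have "T 1 = F (fps_exp 1)" using T1 by auto
  then show ?thesis using main_calc gd by simp
qed

end


theorem proposition3p3:
  fixes sc :: "complex \<Rightarrow> 'a::ab_group_add \<Rightarrow> 'a"
    and P :: "nat \<Rightarrow> 'a \<Rightarrow> real"
    and T :: "real \<Rightarrow> 'a \<Rightarrow> 'a"
  assumes "frechet sc P"
    and "c0_semigroup sc P T"
    and "exp_equicont sc P T"
    and "gen_dom sc P T = UNIV"
    and "equicont sc P (range (\<lambda>n. (gen sc P T) ^^ n))"
  shows "spectral_bound sc P (gen_dom sc P T) (gen sc P T) = elog (spectral_radius sc P (T 1))"
proof -
  interpret sg sc P T by unfold_locales (use assms in auto)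
  show ?thesis by (rule sg_main)
qed

end
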